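(* Let $x$ be a real number with $0<x<1$, and put $s=\sqrt{1-x^2}>0$. Then, as an identity of power series in $q$ (convergent for $|q|<1$), $$\sum_{\lambda\in \mathcal{SC}} x^{n_1(\lambda)} \, q^{\vert\lambda\vert} =\frac{(-q;q^2)_{\infty}}{2x}\left[\left(1-\sqrt{\tfrac{1-x}{1+x}}\right)(-s;-q)_{\infty} + \left(1+\sqrt{\tfrac{1-x}{1+x}} \right)(s;-q)_{\infty} \right].$$
   Context: A partition is self-conjugate if its Young diagram is symmetric about the main diagonal; $\mathcal{SC}$ is the set of all self-conjugate partitions (including the empty partition of size $0$), and $|\lambda|$ is the size. The hook length of the cell $(i,j)$ is the number of cells to its right in row $i$ plus the number below it in column $j$ plus $1$; $n_1(\lambda)$ is the number of cells of $\lambda$ with hook length $1$. $(a;q)_\infty=\prod_{j\ge0}(1-aq^j)$. *)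

theory Defs
  imports "HOL-Analysis.Analysis"
begin

definition is_partition :: "nat list \<Rightarrow> bool" where
  "is_partition la \<longleftrightarrow> sorted_wrt (\<ge>) la \<and> (\<forall>p\<in>set la. 0 < p)"

definition conjugate :: "nat list \<Rightarrow> nat list" where
  "conjugate la = map (\<lambda>j. length (filter (\<lambda>p. j < p) la)) [0..<(if la = [] then 0 else hd la)]"

definition SC :: "nat list set" where
  "SC = {la. is_partition la \<and> conjugate la = la}"

definition psize :: "nat list \<Rightarrow> nat" where
  "psize la = sum_list la"

text \<open>Cells (i,j), 0-indexed: row i, column j.\<close>
definition cells :: "nat list \<Rightarrow> (nat \<times> nat) set" where
  "cells la = {(i, j). i < length la \<and> j < la ! i}"

text \<open>Hook length: arm (cells to the right) + leg (cells below) + 1.\<close>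
definition hook :: "nat list \<Rightarrow> nat \<times> nat \<Rightarrow> nat" where
  "hook la c = (case c of (i, j) \<Rightarrow> (la ! i - j - 1) + (conjugate la ! j - i - 1) + 1)"

definition n1 :: "nat list \<Rightarrow> nat" where
  "n1 la = card {c \<in> cells la. hook la c = 1}"

definition qpoch_inf :: "real \<Rightarrow> real \<Rightarrow> real" where
  "qpoch_inf a q = (\<Prod>j. 1 - a * q ^ j)"

end

theory Submission
  imports Defs
begin


fun tri :: "nat \<Rightarrow> nat" where
  "tri 0 = 0" | "tri (Suc k) = tri k + k"

definition qp :: "real \<Rightarrow> real \<Rightarrow> nat \<Rightarrow> real" where
  "qp a b n = (\<Prod>j<n. 1 - a * b^j)"

definition ec :: "real \<Rightarrow> nat \<Rightarrow> real" where
  "ec b k = (-1)^k * b^(tri k) / qp b b k"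

definition EE :: "real \<Rightarrow> real \<Rightarrow> real" where
  "EE b a = (\<Sum>k. ec b k * a^k)"

lemma qp_0[simp]: "qp a b 0 = 1" by (simp add: qp_def)
lemma qp_Suc: "qp a b (Suc n) = qp a b n * (1 - a * b^n)" by (simp add: qp_def)

lemma abs_pow_lt1: "\<bar>b::real\<bar> < 1 \<Longrightarrow> 0 < n \<Longrightarrow> \<bar>b^n\<bar> < 1"
  by (simp add: power_abs power_less_one_iff)

lemma qp_bb_nz: assumes "\<bar>b\<bar> < 1" shows "qp b b k \<noteq> 0"
proof -
  have "\<forall>j. 1 - b * b^j \<noteq> 0"
  proof
    fix j
    have "\<bar>b^Suc j\<bar> < 1" using assms by (rule abs_pow_lt1) simp
    then show "1 - b * b^j \<noteq> 0" by auto
  qed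
  then show ?thesis by (simp add: qp_def)
qed

lemma ec_Suc: assumes "\<bar>b\<bar> < 1"
  shows "ec b (Suc k) * (1 - b^Suc k) = - (ec b k * b^k)"
proof -
  have "\<bar>b^Suc k\<bar> < 1" using assms by (rule abs_pow_lt1) simp
  then have "1 - b^Suc k \<noteq> 0" by auto
  then show ?thesis using qp_bb_nz[OF assms, of k]
    by (simp add: ec_def qp_Suc power_add field_simps)
qed

lemma ec_0[simp]: "ec b 0 = 1" by (simp add: ec_def)

lemma ec_Suc': assumes "\<bar>b\<bar> < 1"
  shows "ec b (Suc k) = - (ec b k * b^k) / (1 - b^Suc k)"
proof -
  have "\<bar>b^Suc k\<bar> < 1" using assms by (rule abs_pow_lt1) simp
  then have "1 - b^Suc k \<noteq> 0" by auto
  then show ?thesis using ec_Suc[OF assms, of k] by (simp add: field_simps)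
qed

lemma ec_summable: assumes b: "\<bar>b\<bar> < 1"
  shows "summable (\<lambda>k. \<bar>ec b k * a^k\<bar>)"
proof -
  have b0: "0 < 1 - \<bar>b\<bar>" using b by simp
  have "(\<lambda>k. \<bar>a\<bar> * \<bar>b\<bar>^k) \<longlonglongrightarrow> 0"
    using b by (intro tendsto_mult_right_zero LIMSEQ_power_zero) simp
  then have "eventually (\<lambda>k. \<bar>a\<bar> * \<bar>b\<bar>^k < (1 - \<bar>b\<bar>)/2) sequentially"
    using b0 by (intro order_tendstoD(2)) auto
  then obtain N where N: "\<And>k. k \<ge> N \<Longrightarrow> \<bar>a\<bar> * \<bar>b\<bar>^k < (1 - \<bar>b\<bar>)/2"
    unfolding eventually_sequentially by blast
  show ?thesis
  proof (rule summable_ratio_test[of "1/2" N])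
    fix k assume k: "k \<ge> N"
    have "\<bar>b\<bar>^k \<le> 1" using b by (intro power_le_one) auto
    then have "\<bar>b\<bar> * \<bar>b\<bar>^k \<le> \<bar>b\<bar>" by (simp add: mult_left_le)
    then have "\<bar>b^Suc k\<bar> \<le> \<bar>b\<bar>" by (simp add: power_abs abs_mult)
    then have d: "1 - \<bar>b\<bar> \<le> \<bar>1 - b^Suc k\<bar>" by linarith
    have "\<bar>ec b (Suc k) * a^Suc k\<bar> = \<bar>ec b k * a^k\<bar> * (\<bar>a\<bar> * \<bar>b\<bar>^k) / \<bar>1 - b^Suc k\<bar>"
      by (simp add: ec_Suc'[OF b] abs_mult power_abs abs_divide)
    also have "\<dots> \<le> \<bar>ec b k * a^k\<bar> * (\<bar>a\<bar> * \<bar>b\<bar>^k) / (1 - \<bar>b\<bar>)"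
      using d b0 by (intro divide_left_mono) auto
    also have "\<dots> \<le> \<bar>ec b k * a^k\<bar> * ((1 - \<bar>b\<bar>)/2) / (1 - \<bar>b\<bar>)"
      using N[OF k] b0 by (intro divide_right_mono mult_left_mono) auto
    also have "\<dots> = 1/2 * \<bar>ec b k * a^k\<bar>" using b0 by (simp add: field_simps)
    finally show "norm \<bar>ec b (Suc k) * a ^ Suc k\<bar> \<le> 1/2 * norm \<bar>ec b k * a ^ k\<bar>" by simp
  qed (simp add: divide_simps)
qed

lemma ec_summable': "\<bar>b\<bar> < 1 \<Longrightarrow> summable (\<lambda>k. ec b k * a^k)"
  by (rule summable_rabs_cancel[OF ec_summable])

lemma EE_sums: "\<bar>b\<bar> < 1 \<Longrightarrow> (\<lambda>k. ec b k * a^k) sums EE b a"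
  unfolding EE_def by (rule summable_sums[OF ec_summable'])

lemma EE_rec: assumes b: "\<bar>b\<bar> < 1"
  shows "EE b a = (1 - a) * EE b (a*b)"
proof -
  define h where "h k = ec b k * a^k * (1 - b^k)" for k
  have "(\<lambda>k. ec b k * a^k - ec b k * (a*b)^k) sums (EE b a - EE b (a*b))"
    using EE_sums[OF b] by (intro sums_diff) auto
  moreover have "(\<lambda>k. ec b k * a^k - ec b k * (a*b)^k) = h"
    by (auto simp: h_def power_mult_distrib algebra_simps)
  ultimately have hs: "h sums (EE b a - EE b (a*b))" by simp
  have "(\<lambda>k. h (Suc k)) = (\<lambda>k. - a * (ec b k * (a*b)^k))"
  proof
    fix k
    have "h (Suc k) = (ec b (Suc k) * (1 - b^Suc k)) * a^Suc k" by (simp add: h_def)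
    also have "\<dots> = -(ec b k * b^k) * a^Suc k" by (simp only: ec_Suc[OF b])
    also have "\<dots> = - a * (ec b k * (a*b)^k)" by (simp add: power_mult_distrib)
    finally show "h (Suc k) = - a * (ec b k * (a*b)^k)" .
  qed
  moreover have "(\<lambda>k. - a * (ec b k * (a*b)^k)) sums (- a * EE b (a*b))"
    using EE_sums[OF b] by (intro sums_mult)
  ultimately have "(\<lambda>k. h (Suc k)) sums (- a * EE b (a*b))" by simp
  then have "h sums (- a * EE b (a*b) + h 0)" by (simp add: sums_Suc_iff)
  then have "EE b a - EE b (a*b) = - a * EE b (a*b)" using hs sums_unique2 by (simp add: h_def)
  then show ?thesis by (simp add: algebra_simps)
qed

lemma EE_iter: assumes b: "\<bar>b\<bar> < 1"
  shows "EE b a = qp a b N * EE b (a * b^N)"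
proof (induction N)
  case 0 then show ?case by simp
next
  case (Suc N)
  have "EE b (a*b^N) = (1 - a*b^N) * EE b (a*b^N*b)" by (rule EE_rec[OF b])
  moreover have "a*b^N*b = a * b^Suc N" by (simp add: power_Suc2 mult.assoc)
  ultimately have "EE b (a*b^N) = (1 - a*b^N) * EE b (a*b^Suc N)" by metis
  then show ?case using Suc by (simp only: qp_Suc mult.assoc)
qed

lemma EE_near1: assumes b: "\<bar>b\<bar> < 1" and z: "\<bar>z\<bar> \<le> 1"
  shows "\<bar>EE b z - 1\<bar> \<le> \<bar>z\<bar> * (\<Sum>k. \<bar>ec b (Suc k)\<bar>)"
proof -
  have s1: "summable (\<lambda>k. \<bar>ec b (Suc k) * z^Suc k\<bar>)"
    using ec_summable[OF b, of z] by (subst summable_Suc_iff)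
  have s2: "summable (\<lambda>k. \<bar>ec b (Suc k)\<bar>)"
    using ec_summable[OF b, of 1] by (subst summable_Suc_iff[where f="\<lambda>k. \<bar>ec b k\<bar>"]) simp
  have "EE b z - 1 = (\<Sum>k. ec b (Suc k) * z^Suc k)"
    using suminf_split_head[OF ec_summable'[OF b, of z]] by (simp add: EE_def)
  then have "\<bar>EE b z - 1\<bar> \<le> (\<Sum>k. \<bar>ec b (Suc k) * z^Suc k\<bar>)"
    using summable_rabs[OF s1] by simp
  also have "\<dots> \<le> (\<Sum>k. \<bar>z\<bar> * \<bar>ec b (Suc k)\<bar>)"
  proof (rule suminf_le[OF _ s1 summable_mult[OF s2]])
    fix k
    have "\<bar>z\<bar>^k \<le> 1" using z by (intro power_le_one) auto
    then have "\<bar>z\<bar> * \<bar>z\<bar>^k \<le> \<bar>z\<bar>" by (simp add: mult_left_le)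
    then have "\<bar>ec b (Suc k)\<bar> * (\<bar>z\<bar> * \<bar>z\<bar>^k) \<le> \<bar>ec b (Suc k)\<bar> * \<bar>z\<bar>"
      by (intro mult_left_mono) auto
    then show "\<bar>ec b (Suc k) * z^Suc k\<bar> \<le> \<bar>z\<bar> * \<bar>ec b (Suc k)\<bar>"
      by (simp add: abs_mult power_abs mult.commute)
  qed
  also have "\<dots> = \<bar>z\<bar> * (\<Sum>k. \<bar>ec b (Suc k)\<bar>)" by (rule suminf_mult[OF s2])
  finally show ?thesis .
qed

lemma EE_tendsto: assumes b: "\<bar>b\<bar> < 1"
  shows "(\<lambda>N. EE b (a * b^N)) \<longlonglongrightarrow> 1"
proof -
  define M where "M = (\<Sum>k. \<bar>ec b (Suc k)\<bar>)"
  have z0: "(\<lambda>N. \<bar>a * b^N\<bar>) \<longlonglongrightarrow> 0"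
    using b by (simp add: abs_mult power_abs) (intro tendsto_mult_right_zero LIMSEQ_power_zero, simp)
  then have ev: "eventually (\<lambda>N. \<bar>a * b^N\<bar> < 1) sequentially"
    by (intro order_tendstoD(2)) auto
  have "(\<lambda>N. EE b (a * b^N) - 1) \<longlonglongrightarrow> 0"
  proof (rule Lim_null_comparison)
    show "eventually (\<lambda>N. norm (EE b (a * b^N) - 1) \<le> \<bar>a * b^N\<bar> * M) sequentially"
      using ev by eventually_elim (use EE_near1[OF b] in \<open>auto simp: M_def\<close>)
    show "(\<lambda>N. \<bar>a * b^N\<bar> * M) \<longlonglongrightarrow> 0"
      using z0 by (rule tendsto_mult_left_zero)
  qed
  then show ?thesis by (rule LIM_zero_cancel)
qed

lemma qpoch_EE: assumes b: "\<bar>b\<bar> < 1" and nz: "\<And>j. a * b^j \<noteq> 1"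
  shows "qpoch_inf a b = EE b a"
proof -
  have qpnz: "qp a b N \<noteq> 0" for N using nz by (simp add: qp_def)
  have t1: "(\<lambda>N. EE b (a * b^N)) \<longlonglongrightarrow> 1" by (rule EE_tendsto[OF b])
  then have ev: "eventually (\<lambda>N. EE b (a * b^N) \<noteq> 0) sequentially"
    by (rule tendsto_imp_eventually_ne) simp
  then obtain N where "EE b (a * b^N) \<noteq> 0" by (auto simp: eventually_sequentially)
  then have Enz: "EE b a \<noteq> 0" using EE_iter[OF b, of a N] qpnz[of N] by simp
  have "(\<lambda>N. EE b a / EE b (a * b^N)) \<longlonglongrightarrow> EE b a / 1"
    by (intro tendsto_divide tendsto_const t1) simp
  then have "(\<lambda>N. EE b a / EE b (a * b^N)) \<longlonglongrightarrow> EE b a" by simp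
  moreover have "eventually (\<lambda>N. EE b a / EE b (a * b^N) = qp a b N) sequentially"
  proof (rule eventuallyI)
    fix N show "EE b a / EE b (a * b^N) = qp a b N"
    proof (cases "EE b (a * b^N) = 0")
      case True then show ?thesis using EE_iter[OF b, of a N] qpnz[of N] Enz by simp
    next
      case False then show ?thesis using EE_iter[OF b, of a N] by (simp add: field_simps)
    qed
  qed
  ultimately have "qp a b \<longlonglongrightarrow> EE b a" by (rule Lim_transform_eventually)
  then have "(\<lambda>n. qp a b (Suc n)) \<longlonglongrightarrow> EE b a" by (rule LIMSEQ_Suc)
  moreover have "(\<lambda>n. \<Prod>i\<le>n. 1 - a * b^(i+0)) = (\<lambda>n. qp a b (Suc n))"
    by (simp add: qp_def lessThan_Suc_atMost)
  ultimately have "raw_has_prod (\<lambda>j. 1 - a * b^j) 0 (EE b a)"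
    using Enz by (simp add: raw_has_prod_def)
  then have "(\<lambda>j. 1 - a * b^j) has_prod (EE b a)" by (simp add: has_prod_def)
  then show ?thesis unfolding qpoch_inf_def by (rule has_prod_unique[symmetric])
qed


fun gb :: "real \<Rightarrow> nat \<Rightarrow> nat \<Rightarrow> real" where
  "gb p 0 m = (if m = 0 then 1 else 0)"
| "gb p (Suc d) m = gb p d m + (if m = 0 then 0 else p^(Suc d - m) * gb p d (m-1))"

lemma gb_zero: "d < m \<Longrightarrow> gb p d m = 0"
  by (induction d arbitrary: m) auto

lemma gb_0: "gb p d 0 = 1"
  by (induction d) auto

lemma gb_diag: "gb p d d = 1"
  by (induction d) (auto simp: gb_zero)

lemma qbin: "qp u p d = (\<Sum>m\<le>d. (-u)^m * p^(tri m) * gb p d m)"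
proof (induction d)
  case 0 then show ?case by simp
next
  case (Suc d)
  define c where "c m = (-u)^m * p^(tri m)" for m
  have "(\<Sum>m\<le>Suc d. c m * gb p (Suc d) m)
      = (\<Sum>m\<le>Suc d. c m * gb p d m) + (\<Sum>m\<le>Suc d. c m * (if m = 0 then 0 else p^(Suc d - m) * gb p d (m-1)))"
    by (simp add: sum.distrib algebra_simps)
  also have "(\<Sum>m\<le>Suc d. c m * gb p d m) = (\<Sum>m\<le>d. c m * gb p d m)"
    by (simp add: gb_zero)
  also have "(\<Sum>m\<le>Suc d. c m * (if m = 0 then 0 else p^(Suc d - m) * gb p d (m-1)))
      = (\<Sum>k\<le>d. c (Suc k) * (p^(Suc d - Suc k) * gb p d k))"
    by (subst sum.atMost_Suc_shift) simp
  also have "\<dots> = (\<Sum>k\<le>d. - u * p^d * (c k * gb p d k))"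
  proof (rule sum.cong[OF refl])
    fix k assume "k \<in> {..d}"
    then have "p^k * p^(d-k) = p^d" by (metis le_add_diff_inverse power_add atMost_iff)
    then show "c (Suc k) * (p^(Suc d - Suc k) * gb p d k) = - u * p^d * (c k * gb p d k)"
      unfolding c_def by (simp add: power_add mult.assoc[symmetric])
  qed
  also have "\<dots> = - u * p^d * (\<Sum>k\<le>d. c k * gb p d k)" by (simp add: sum_distrib_left)
  finally have "(\<Sum>m\<le>Suc d. c m * gb p (Suc d) m) = (\<Sum>m\<le>d. c m * gb p d m) * (1 - u * p^d)"
    by (simp add: algebra_simps)
  then show ?case using Suc by (simp add: qp_Suc c_def)
qed

lemma gb_prod: "m \<le> d \<Longrightarrow> gb p d m * (qp p p m * qp p p (d-m)) = qp p p d"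
proof (induction d arbitrary: m)
  case 0 then show ?case by simp
next
  case (Suc d)
  show ?case
  proof (cases "m = 0")
    case True then show ?thesis by (simp add: gb_0)
  next
    case False
    show ?thesis
    proof (cases "m = Suc d")
      case True then show ?thesis by (simp add: gb_diag gb_zero)
    next
      case False
      obtain k where k: "m = Suc k" using \<open>m \<noteq> 0\<close> by (cases m) auto
      define n where "n = d - Suc k"
      have n: "d = Suc k + n" using k Suc.prems False by (simp add: n_def)
      have I1: "gb p d m * (qp p p m * qp p p n) = qp p p d"
        using Suc.IH[of m] n k by simp
      have I2: "gb p d k * (qp p p k * qp p p (Suc n)) = qp p p d"
        using Suc.IH[of k] n k by simp
      have "gb p (Suc d) m * (qp p p m * qp p p (Suc d - m))
          = gb p d m * (qp p p m * qp p p n) * (1 - p * p^n)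
            + p^(Suc n) * (gb p d k * (qp p p k * qp p p (Suc n))) * (1 - p * p^k)"
      proof -
        have "Suc d - m = Suc n" "m - 1 = k" using k n by auto
        then show ?thesis using k by (simp add: qp_Suc algebra_simps)
      qed
      also have "\<dots> = qp p p d * (1 - p * p^n) + p^(Suc n) * qp p p d * (1 - p * p^k)"
        by (simp only: I1 I2)
      also have "\<dots> = qp p p d * ((1 - p * p^n) + p^(Suc n) * (1 - p * p^k))"
        by (simp add: algebra_simps)
      also have "\<dots> = qp p p d * (1 - p * p^d)"
        using n by (simp add: algebra_simps power_add)
      finally show ?thesis by (simp add: qp_Suc)
    qed
  qed
qed


lemma tri2: "2 * tri e + e = e * e"
  by (induction e) (auto simp: algebra_simps)

lemma qp_pos: "0 \<le> p \<Longrightarrow> p < 1 \<Longrightarrow> qp p p n > 0"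
proof -
  assume p: "0 \<le> p" "p < 1"
  have "\<forall>j. 0 < 1 - p * p^j"
  proof
    fix j have "p^Suc j < 1" using p by (simp only: power_less_one_iff) simp
    then show "0 < 1 - p * p^j" by simp
  qed
  then show ?thesis unfolding qp_def by (intro prod_pos) auto
qed

definition TT :: "real \<Rightarrow> real \<Rightarrow> real \<Rightarrow> nat \<times> nat \<Rightarrow> real" where
  "TT q r u = (\<lambda>(m,e). q^((m+e)*(m+e)) * r^(m+e) * (-u)^m * q^(2*tri m)
                 / (qp (q^2) (q^2) m * qp (q^2) (q^2) e))"

definition phi :: "real \<Rightarrow> real \<Rightarrow> real \<Rightarrow> nat \<Rightarrow> real" where
  "phi q r u m = (-u)^m * q^(2*tri m + m*m) * r^m * EE (q^2) (-(q*(q^2)^m*r)) / qp (q^2) (q^2) m"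

lemma TT_fibre_d: assumes q: "\<bar>q\<bar> < 1"
  shows "(\<Sum>m\<le>d. TT q r u (m, d-m)) = q^(d*d) * r^d * qp u (q^2) d / qp (q^2) (q^2) d"
proof -
  define p where "p = q^2"
  have p: "0 \<le> p" "p < 1" using q by (auto simp: p_def abs_square_less_1)
  have nz: "qp p p n \<noteq> 0" for n using qp_pos[OF p] by (metis less_irrefl)
  have "(\<Sum>m\<le>d. TT q r u (m, d-m)) = (\<Sum>m\<le>d. q^(d*d) * r^d / qp p p d * ((-u)^m * p^(tri m) * gb p d m))"
  proof (rule sum.cong[OF refl])
    fix m assume "m \<in> {..d}"
    then have md: "m \<le> d" by simp
    have g: "gb p d m * (qp p p m * qp p p (d-m)) = qp p p d" by (rule gb_prod[OF md])
    have e: "m + (d - m) = d" using md by simp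
    define A where "A = q^(d*d) * r^d * (-u)^m * p^(tri m)"
    define X where "X = qp p p m * qp p p (d-m)"
    have Xnz: "X \<noteq> 0" using nz unfolding X_def by simp
    have gnz: "gb p d m \<noteq> 0" using g nz[of d] unfolding X_def by auto
    have "TT q r u (m, d-m) = A / X"
      unfolding TT_def A_def X_def using e by (simp add: p_def power_mult)
    also have "\<dots> = A * gb p d m / (gb p d m * X)" using gnz by simp
    also have "\<dots> = A * gb p d m / qp p p d" using g unfolding X_def by simp
    finally show "TT q r u (m, d-m) = q^(d*d) * r^d / qp p p d * ((-u)^m * p^(tri m) * gb p d m)"
      unfolding A_def by simp
  qed
  also have "\<dots> = q^(d*d) * r^d / qp p p d * qp u p d" by (simp add: qbin sum_distrib_left)
  finally show ?thesis by (simp add: p_def)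
qed

lemma EE_has_sum: "\<bar>b\<bar> < 1 \<Longrightarrow> ((\<lambda>k. ec b k * a^k) has_sum EE b a) UNIV"
  by (rule norm_summable_imp_has_sum) (simp_all add: ec_summable EE_sums)

lemma TT_fibre_m: assumes q: "\<bar>q\<bar> < 1"
  shows "((\<lambda>e. TT q r u (m,e)) has_sum phi q r u m) UNIV"
proof -
  define p where "p = q^2"
  have p: "0 \<le> p" "p < 1" using q by (auto simp: p_def abs_square_less_1)
  have nz: "qp p p n \<noteq> 0" for n using qp_pos[OF p] by (metis less_irrefl)
  define K where "K = (-u)^m * q^(2*tri m + m*m) * r^m / qp p p m"
  define a where "a = -(q*p^m*r)"
  have eq: "TT q r u (m,e) = K * (ec p e * a^e)" for e
  proof -
    have ex: "(m+e)*(m+e) = m*m + (2*tri e + e) + 2*(m*e)" using tri2[of e] by (simp add: algebra_simps)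
    have h1: "q^((m+e)*(m+e)) = q^(m*m) * p^(tri e) * q^e * p^(m*e)"
      unfolding ex p_def by (simp only: power_add power_mult)
    have h2: "a^e = (-1)^e * q^e * p^(m*e) * r^e"
    proof -
      have "a^e = (-1)^e * (q*p^m*r)^e" unfolding a_def by (rule power_minus)
      also have "(q*p^m*r)^e = q^e * p^(m*e) * r^e" by (simp add: power_mult_distrib power_mult)
      finally show ?thesis by simp
    qed
    have h3: "(-1::real)^e * (-1)^e = 1" by (simp flip: power_add)
    have r1: "K * (ec p e * a^e) = ((-u)^m * q^(2*tri m + m*m) * r^m * ((-1)^e * p^(tri e) * a^e)) / (qp p p m * qp p p e)"
      unfolding K_def ec_def by simp
    have r2: "TT q r u (m,e) = (q^((m+e)*(m+e)) * r^(m+e) * (-u)^m * q^(2*tri m)) / (qp p p m * qp p p e)"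
      unfolding TT_def p_def by simp
    have r3: "(-u)^m * q^(2*tri m + m*m) * r^m * ((-1)^e * p^(tri e) * a^e)
        = ((-u)^m * q^(2*tri m) * q^(m*m) * r^m * r^e * p^(tri e) * q^e * p^(m*e)) * ((-1)^e * (-1)^e)"
      unfolding h2 by (simp only: power_add mult_ac)
    have r4: "q^((m+e)*(m+e)) * r^(m+e) * (-u)^m * q^(2*tri m)
        = (-u)^m * q^(2*tri m) * q^(m*m) * r^m * r^e * p^(tri e) * q^e * p^(m*e)"
      unfolding h1 by (simp only: power_add mult_ac)
    show ?thesis unfolding r1 r2 r3 r4 h3 by simp
  qed
  have "((\<lambda>e. K * (ec p e * a^e)) has_sum K * EE p a) UNIV"
    using p by (intro has_sum_cmult_right EE_has_sum) simp
  moreover have "K * EE p a = phi q r u m"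
    unfolding K_def a_def phi_def p_def by simp
  ultimately show ?thesis using eq by simp
qed

lemma aq_summable: assumes q: "\<bar>q\<bar> < 1"
  shows "summable (\<lambda>n. \<bar>q\<bar>^(n*n) / qp (q^2) (q^2) n)"
proof -
  define p where "p = q^2"
  have p: "0 \<le> p" "p < 1" using q by (auto simp: p_def abs_square_less_1)
  have pos: "qp p p n > 0" for n using qp_pos[OF p] .
  have b0: "0 < 1 - p" using p by simp
  have "(\<lambda>n. \<bar>q\<bar>^n) \<longlonglongrightarrow> 0" using q by (intro LIMSEQ_power_zero) simp
  then have "eventually (\<lambda>n. \<bar>q\<bar>^n < (1 - p)/2) sequentially"
    using b0 by (intro order_tendstoD(2)) auto
  then obtain N where N: "\<And>n. n \<ge> N \<Longrightarrow> \<bar>q\<bar>^n < (1 - p)/2"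
    unfolding eventually_sequentially by blast
  show ?thesis unfolding p_def[symmetric]
  proof (rule summable_ratio_test[of "1/2" N])
    fix n assume n: "n \<ge> N"
    have pn: "p * p^n \<le> p" using p by (simp add: mult_left_le power_le_one)
    then have d: "1 - p \<le> 1 - p * p^n" by linarith
    have qn: "\<bar>q\<bar>^(n+1) \<le> \<bar>q\<bar>^n" using q by (intro power_decreasing) auto
    have e: "Suc n * Suc n = n*n + n + (n+1)" by simp
    have "\<bar>q\<bar>^(Suc n * Suc n) / qp p p (Suc n)
          = (\<bar>q\<bar>^(n*n) / qp p p n) * (\<bar>q\<bar>^n * \<bar>q\<bar>^(n+1) / (1 - p*p^n))"
      unfolding e power_add qp_Suc by simp
    also have "\<dots> \<le> (\<bar>q\<bar>^(n*n) / qp p p n) * ((1-p)/2 * 1 / (1 - p))"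
    proof (intro mult_left_mono frac_le mult_mono)
      show "\<bar>q\<bar>^n \<le> (1-p)/2" using N[OF n] by simp
      show "\<bar>q\<bar>^(n+1) \<le> 1" using q by (intro power_le_one) auto
    qed (use pos b0 d in \<open>auto intro: divide_nonneg_pos less_imp_le\<close>)
    also have "\<dots> = 1/2 * (\<bar>q\<bar>^(n*n) / qp p p n)"
    proof -
      have h: "(1-p)/2 * 1 / (1 - p) = 1/2" using b0 by simp
      show ?thesis unfolding h by simp
    qed
    finally show "norm (\<bar>q\<bar>^(Suc n * Suc n) / qp p p (Suc n)) \<le> 1/2 * norm (\<bar>q\<bar>^(n*n) / qp p p n)"
      using pos[of n] pos[of "Suc n"] by simp
  qed simp
qed

lemma TT_summable: assumes q: "\<bar>q\<bar> < 1" and r: "\<bar>r\<bar> \<le> 1" and u: "\<bar>u\<bar> \<le> 1"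
  shows "TT q r u summable_on UNIV"
proof -
  define p where "p = q^2"
  have p: "0 \<le> p" "p < 1" using q by (auto simp: p_def abs_square_less_1)
  have pos: "qp p p n > 0" for n using qp_pos[OF p] .
  define a where "a n = \<bar>q\<bar>^(n*n) / qp p p n" for n
  have a0: "a n \<ge> 0" for n using pos[of n] by (simp add: a_def)
  have "summable a" unfolding a_def p_def by (rule aq_summable[OF q])
  then have "a summable_on UNIV" using a0 by (simp add: summable_on_UNIV_nonneg_real_iff)
  then obtain A where hA: "(a has_sum A) UNIV" by (auto simp: summable_on_def)
  have "(\<lambda>z. a (fst z) * a (snd z)) summable_on (SIGMA m:UNIV. UNIV)"
  proof (rule summable_on_SigmaI[where g="\<lambda>m. a m * A"])
    show "((\<lambda>y. a (fst (m, y)) * a (snd (m, y))) has_sum a m * A) UNIV" for m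
      using hA by (simp add: has_sum_cmult_right)
    show "(\<lambda>m. a m * A) summable_on UNIV"
      using \<open>a summable_on UNIV\<close> by (rule summable_on_cmult_left)
  qed (simp add: a0)
  then have sAA: "(\<lambda>z. a (fst z) * a (snd z)) summable_on UNIV" by simp
  have bound: "norm (TT q r u z) \<le> a (fst z) * a (snd z)" for z
  proof -
    obtain m e where z: "z = (m,e)" by (cases z)
    have le: "m*m + e*e \<le> (m+e)*(m+e)" by (simp add: algebra_simps)
    have "\<bar>q\<bar>^((m+e)*(m+e)) * \<bar>r\<bar>^(m+e) * \<bar>u\<bar>^m * \<bar>q\<bar>^(2*tri m) \<le> \<bar>q\<bar>^(m*m + e*e) * 1 * 1 * 1"
      using q r u le by (intro mult_mono power_decreasing power_le_one) auto
    then have "\<bar>q\<bar>^((m+e)*(m+e)) * \<bar>r\<bar>^(m+e) * \<bar>u\<bar>^m * \<bar>q\<bar>^(2*tri m) / (qp p p m * qp p p e)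
        \<le> \<bar>q\<bar>^(m*m + e*e) / (qp p p m * qp p p e)"
      using pos[of m] pos[of e] by (intro divide_right_mono) auto
    moreover have "norm (TT q r u z) = \<bar>q\<bar>^((m+e)*(m+e)) * \<bar>r\<bar>^(m+e) * \<bar>u\<bar>^m * \<bar>q\<bar>^(2*tri m) / (qp p p m * qp p p e)"
    proof -
      have "TT q r u z = (q^((m+e)*(m+e)) * r^(m+e) * (-u)^m * q^(2*tri m)) / (qp p p m * qp p p e)"
        unfolding z TT_def p_def by simp
      moreover have "\<bar>qp p p m * qp p p e\<bar> = qp p p m * qp p p e"
        using pos[of m] pos[of e] by simp
      ultimately show ?thesis
        by (simp only: real_norm_def abs_divide abs_mult power_abs abs_minus_cancel)
    qed
    moreover have "a (fst z) * a (snd z) = \<bar>q\<bar>^(m*m + e*e) / (qp p p m * qp p p e)"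
      unfolding z a_def by (simp add: power_add)
    ultimately show ?thesis by simp
  qed
  have "(\<lambda>z. norm (TT q r u z)) summable_on UNIV"
    by (rule Infinite_Sum.abs_summable_on_comparison_test'[OF sAA bound])
  then show ?thesis by (rule Infinite_Sum.abs_summable_summable)
qed

lemma Phi_d: assumes q: "\<bar>q\<bar> < 1" and r: "\<bar>r\<bar> \<le> 1" and u: "\<bar>u\<bar> \<le> 1"
  shows "((\<lambda>d. q^(d*d) * r^d * qp u (q^2) d / qp (q^2) (q^2) d) has_sum infsum (TT q r u) UNIV) UNIV"
proof -
  have hT: "(TT q r u has_sum infsum (TT q r u) UNIV) UNIV"
    using TT_summable[OF q r u] by (simp add: summable_iff_has_sum_infsum)
  have "((\<lambda>z. TT q r u (snd z, fst z - snd z)) has_sum infsum (TT q r u) UNIV) (SIGMA d:UNIV. {..d})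
      = (TT q r u has_sum infsum (TT q r u) UNIV) UNIV"
    by (rule has_sum_reindex_bij_witness[where i="\<lambda>z. (fst z + snd z, fst z)" and j="\<lambda>z. (snd z, fst z - snd z)"])
      auto
  with hT have hS: "((\<lambda>z. TT q r u (snd z, fst z - snd z)) has_sum infsum (TT q r u) UNIV) (SIGMA d:UNIV. {..d})"
    by simp
  show ?thesis
  proof (rule has_sum_Sigma'[OF hS])
    fix d :: nat
    have "((\<lambda>m. TT q r u (m, d - m)) has_sum (\<Sum>m\<le>d. TT q r u (m, d-m))) {..d}"
      by (rule has_sum_finite) simp
    then show "((\<lambda>m. TT q r u (snd (d, m), fst (d, m) - snd (d, m))) has_sum
        q^(d*d) * r^d * qp u (q^2) d / qp (q^2) (q^2) d) {..d}"
      by (simp add: TT_fibre_d[OF q])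
  qed
qed

lemma Phi_m: assumes q: "\<bar>q\<bar> < 1" and r: "\<bar>r\<bar> \<le> 1" and u: "\<bar>u\<bar> \<le> 1"
  shows "(phi q r u has_sum infsum (TT q r u) UNIV) UNIV"
proof -
  have hT: "(TT q r u has_sum infsum (TT q r u) UNIV) (SIGMA m:UNIV. UNIV)"
    using TT_summable[OF q r u] by (simp add: summable_iff_has_sum_infsum)
  show ?thesis
    by (rule has_sum_Sigma'[OF hT]) (use TT_fibre_m[OF q] in simp)
qed


lemma tri_even: "tri (2*m) = 2*tri m + m*m"
  by (induction m) (auto simp: algebra_simps)

lemma tri_odd: "tri (Suc (2*m)) = tri (2*m) + 2*m"
  by simp

lemma qp_alt: "qp (-q) (-q) (2*m) = qp (-q) (q^2) m * qp (q^2) (q^2) m"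
proof (induction m)
  case 0 then show ?case by simp
next
  case (Suc m)
  have e: "2 * Suc m = Suc (Suc (2*m))" by simp
  have "(-q)^(2*m) = (q^2)^m" by (simp add: power_mult)
  moreover have "(-q)^(Suc (2*m)) = - (q * (q^2)^m)" by (simp add: power_mult)
  ultimately show ?case unfolding e using Suc by (simp add: qp_Suc algebra_simps power2_eq_square)
qed

lemma neg1_tri: "(-1::real)^(tri (2*m)) = (-1)^m"
proof -
  have "(-1::real)^(tri (2*m)) = (-1)^(m*m)"
    unfolding tri_even by (simp add: power_add power_mult)
  also have "\<dots> = (-1)^m" by (cases "even m") (auto simp: power_mult)
  finally show ?thesis .
qed

lemma negq_tri: "(-q::real)^(tri (2*m)) = (-1)^m * q^(2*tri m + m*m)"
proof -
  have "(-q)^(tri (2*m)) = (-1)^(tri (2*m)) * q^(tri (2*m))" by (rule power_minus)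
  also have "\<dots> = (-1)^m * q^(tri (2*m))" by (simp only: neg1_tri)
  finally show ?thesis by (simp only: tri_even)
qed

lemma ec_even: "ec (-q) (2*m) = (-1)^m * q^(2*tri m + m*m) / (qp (-q) (q^2) m * qp (q^2) (q^2) m)"
  unfolding ec_def by (simp add: negq_tri qp_alt)

lemma ec_odd: "ec (-q) (Suc (2*m)) = - ((-1)^m * q^(2*tri m + m*m) * (q^2)^m
                 / (qp (-q) (q^2) (Suc m) * qp (q^2) (q^2) m))"
proof -
  have "(-q)^(tri (Suc (2*m))) = (-1)^m * q^(2*tri m + m*m) * (q^2)^m"
    unfolding tri_odd power_add negq_tri by (simp add: power_mult)
  moreover have "qp (-q) (-q) (Suc (2*m)) = qp (-q) (q^2) (Suc m) * qp (q^2) (q^2) m"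
    by (simp add: qp_Suc qp_alt power_mult)
  ultimately show ?thesis unfolding ec_def by simp
qed

lemma abs_mult_lt1: "\<bar>a::real\<bar> < 1 \<Longrightarrow> \<bar>c\<bar> \<le> 1 \<Longrightarrow> \<bar>a * c\<bar> < 1"
proof -
  assume a: "\<bar>a\<bar> < 1" and c: "\<bar>c\<bar> \<le> 1"
  have "\<bar>a\<bar> * \<bar>c\<bar> \<le> \<bar>a\<bar>" using c by (simp add: mult_left_le)
  then show ?thesis using a by (simp add: abs_mult)
qed

lemma rhs_sums:
  fixes x q s t :: real
  assumes q: "\<bar>q\<bar> < 1" and st: "s * t = 1 - x"
  shows "(\<lambda>m. 2 * ((ec (-q) (2*m) + (1 - x) * ec (-q) (Suc (2*m))) * (s^2)^m))
           sums ((1 - t) * EE (-q) (-s) + (1 + t) * EE (-q) s)"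
proof -
  have q': "\<bar>-q\<bar> < 1" using q by simp
  define g where "g k = ec (-q) k * ((1 - t) * (-s)^k + (1 + t) * s^k)" for k
  have "(\<lambda>k. (1 - t) * (ec (-q) k * (-s)^k) + (1 + t) * (ec (-q) k * s^k))
          sums ((1 - t) * EE (-q) (-s) + (1 + t) * EE (-q) s)"
    by (intro sums_add sums_mult EE_sums[OF q'])
  moreover have "(\<lambda>k. (1 - t) * (ec (-q) k * (-s)^k) + (1 + t) * (ec (-q) k * s^k)) = g"
    by (auto simp: g_def algebra_simps)
  ultimately have "g sums ((1 - t) * EE (-q) (-s) + (1 + t) * EE (-q) s)" by simp
  then have "(\<lambda>n. sum g {n*2..<n*2+2}) sums ((1 - t) * EE (-q) (-s) + (1 + t) * EE (-q) s)"
    by (rule sums_group) simp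
  moreover have "sum g {n*2..<n*2+2} = 2 * ((ec (-q) (2*n) + (1 - x) * ec (-q) (Suc (2*n))) * (s^2)^n)" for n
  proof -
    have "{n*2..<n*2+2} = {2*n, Suc (2*n)}" by auto
    then have "sum g {n*2..<n*2+2} = g (2*n) + g (Suc (2*n))" by simp
    moreover have "g (2*n) = 2 * ec (-q) (2*n) * (s^2)^n"
    proof -
      have f1: "(-s)^(2*n) = (s^2)^n" "s^(2*n) = (s^2)^n" by (simp_all add: power_mult)
      show ?thesis unfolding g_def f1 by (simp add: algebra_simps)
    qed
    moreover have "g (Suc (2*n)) = 2 * (s * t) * ec (-q) (Suc (2*n)) * (s^2)^n"
    proof -
      have f1: "(-s)^(Suc (2*n)) = - s * (s^2)^n" by (simp only: power_Suc power_mult) simp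
      have f2: "s^(Suc (2*n)) = s * (s^2)^n" by (simp only: power_Suc power_mult)
      show ?thesis unfolding g_def f1 f2 by (simp add: algebra_simps)
    qed
    ultimately show ?thesis using st by (simp add: algebra_simps)
  qed
  ultimately show ?thesis by simp
qed

lemma alg_id:
  fixes x P Q f c v Z W sg :: real
  assumes "x \<noteq> 0" "P \<noteq> 0" "Q \<noteq> 0" "f \<noteq> 0"
  shows "(1 - 1/x) * (sg * v * Z * c * W / P) + (1/x) * (sg * v * Z * (f * W) / P)
       = Q * f * W / x * ((sg * Z / (Q * P) + (1 - x) * - (sg * Z * c / (Q * f * P))) * v)"
  using assms by (simp add: field_simps)

lemma coeff_eq:
  fixes x q :: real
  assumes x: "0 < x" and q: "\<bar>q\<bar> < 1"
  defines "u \<equiv> 1 - x^2"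
  shows "(1 - 1/x) * phi q (q^2) u m + (1/x) * phi q 1 u m
       = EE (q^2) (-q) / x * ((ec (-q) (2*m) + (1 - x) * ec (-q) (Suc (2*m))) * u^m)"
proof -
  define p where "p = q^2"
  have p: "0 \<le> p" "p < 1" using q by (auto simp: p_def abs_square_less_1)
  have p': "\<bar>p\<bar> < 1" using p by simp
  define W where "W = EE p (-q * p^Suc m)"
  define P0 where "P0 = qp p p m"
  define Qm where "Qm = qp (-q) p m"
  define Z where "Z = q^(2*tri m + m*m)"
  have P0: "P0 \<noteq> 0" unfolding P0_def using qp_pos[OF p] by (metis less_irrefl)
  have qpm: "\<bar>q * p^m\<bar> < 1"
    using q p by (intro abs_mult_lt1) (auto simp: power_le_one)
  have f1: "1 + q * p^m \<noteq> 0" using qpm by auto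
  have Qm: "Qm \<noteq> 0"
  proof -
    have "\<forall>j<m. 1 - (-q) * p^j \<noteq> 0"
    proof (intro allI impI)
      fix j assume "j < m"
      have "\<bar>q * p^j\<bar> < 1" using q p by (intro abs_mult_lt1) (auto simp: power_le_one)
      then show "1 - (-q) * p^j \<noteq> 0" by auto
    qed
    then show ?thesis unfolding Qm_def qp_def by simp
  qed
  have phip: "phi q p u m = (-u)^m * Z * p^m * W / P0"
  proof -
    have e: "EE p (-(q*p^m*p)) = W" unfolding W_def by (rule arg_cong[where f="EE p"]) (simp add: algebra_simps)
    have "phi q p u m = (-u)^m * Z * p^m * EE p (-(q*p^m*p)) / P0"
      unfolding phi_def Z_def P0_def p_def by simp
    then show ?thesis unfolding e .
  qed
  have phi1: "phi q 1 u m = (-u)^m * Z * ((1 + q * p^m) * W) / P0"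
  proof -
    have "EE p (-(q * p^m)) = (1 - (-(q * p^m))) * EE p (-(q*p^m) * p)" by (rule EE_rec[OF p'])
    moreover have "EE p (-(q*p^m) * p) = W" unfolding W_def by (rule arg_cong[where f="EE p"]) (simp add: algebra_simps)
    ultimately have "EE p (-(q * p^m * 1)) = (1 + q * p^m) * W" unfolding W_def by simp
    then show ?thesis unfolding phi_def Z_def P0_def p_def by simp
  qed
  have C0: "EE p (-q) = Qm * (1 + q * p^m) * W"
    using EE_iter[OF p', of "-q" "Suc m"] unfolding W_def Qm_def by (simp add: qp_Suc)
  have ev: "ec (-q) (2*m) = (-1)^m * Z / (Qm * P0)"
    unfolding ec_even Z_def Qm_def P0_def p_def ..
  have od: "ec (-q) (Suc (2*m)) = - ((-1)^m * Z * p^m / (Qm * (1 + q * p^m) * P0))"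
    unfolding ec_odd Z_def Qm_def P0_def p_def by (simp add: qp_Suc algebra_simps)
  have um: "(-u)^m = (-1)^m * u^m" by (rule power_minus)
  show ?thesis
    unfolding p_def[symmetric] phip phi1 C0 ev od um
    using alg_id[of x P0 Qm "1 + q * p^m" "(-1)^m" "u^m" Z "p^m" W] x P0 Qm f1 by (simp add: mult.assoc)
qed


lemma analytic:
  fixes x q :: real
  assumes x0: "0 < x" and x1: "x < 1" and q: "\<bar>q\<bar> < 1"
  defines "s \<equiv> sqrt (1 - x\<^sup>2)"
  shows "((\<lambda>d. q^(d*d) * (((q^2)^d + (1 - (q^2)^d) / x) * (qp (1 - x^2) (q^2) d / qp (q^2) (q^2) d))) has_sum
           (qpoch_inf (-q) (q\<^sup>2) / (2 * x) *
             ((1 - sqrt ((1 - x) / (1 + x))) * qpoch_inf (-s) (-q)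
              + (1 + sqrt ((1 - x) / (1 + x))) * qpoch_inf s (-q)))) UNIV"
proof -
  define t where "t = sqrt ((1 - x) / (1 + x))"
  define u where "u = 1 - x^2"
  define p where "p = q^2"
  have p: "0 \<le> p" "p < 1" using q by (auto simp: p_def abs_square_less_1)
  have "x^2 < 1" using x0 x1 by (simp add: power_less_one_iff)
  moreover have "0 < x^2" using x0 by simp
  ultimately have u01: "0 < u" "u < 1" by (auto simp: u_def)
  have uabs: "\<bar>u\<bar> \<le> 1" using u01 by simp
  have s2: "s^2 = u" unfolding s_def u_def using u01 by (simp add: u_def)
  have s01: "0 \<le> s" "s < 1" unfolding s_def using u01 by (auto simp: u_def)
  have st: "s * t = 1 - x"
  proof -
    have "(1 - x^2) * ((1 - x) / (1 + x)) = (1 - x)^2"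
      using x0 by (simp add: field_simps power2_eq_square)
    then have "s * t = sqrt ((1 - x)^2)" unfolding s_def t_def by (simp add: real_sqrt_mult[symmetric])
    then show ?thesis using x1 by simp
  qed
  define K where "K d = qp u p d / qp p p d" for d
  define Tp where "Tp = infsum (TT q p u) UNIV"
  define T1 where "T1 = infsum (TT q 1 u) UNIV"
  have hp: "((\<lambda>d. q^(d*d) * p^d * qp u p d / qp p p d) has_sum Tp) UNIV"
    unfolding Tp_def p_def using Phi_d[OF q _ uabs, of p] p by (simp add: p_def)
  have h1: "((\<lambda>d. q^(d*d) * 1^d * qp u p d / qp p p d) has_sum T1) UNIV"
    unfolding T1_def p_def using Phi_d[OF q _ uabs, of 1] by simp
  define L where "L = (1 - 1/x) * Tp + (1/x) * T1"
  have "((\<lambda>d. (1 - 1/x) * (q^(d*d) * p^d * qp u p d / qp p p d) + (1/x) * (q^(d*d) * 1^d * qp u p d / qp p p d)) has_sum L) UNIV"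
    unfolding L_def by (intro has_sum_add has_sum_cmult_right hp h1)
  moreover have "(\<lambda>d. (1 - 1/x) * (q^(d*d) * p^d * qp u p d / qp p p d) + (1/x) * (q^(d*d) * 1^d * qp u p d / qp p p d))
      = (\<lambda>d. q^(d*d) * ((p^d + (1 - p^d) / x) * (qp u p d / qp p p d)))"
  proof (rule ext)
    fix d
    have "qp p p d \<noteq> 0" using qp_pos[OF p, of d] by simp
    then show "(1 - 1/x) * (q^(d*d) * p^d * qp u p d / qp p p d) + (1/x) * (q^(d*d) * 1^d * qp u p d / qp p p d)
      = q^(d*d) * ((p^d + (1 - p^d) / x) * (qp u p d / qp p p d))"
      using x0 by (simp add: field_simps)
  qed
  ultimately have hL: "((\<lambda>d. q^(d*d) * ((p^d + (1 - p^d) / x) * (qp u p d / qp p p d))) has_sum L) UNIV"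
    by simp
  have "((\<lambda>m. (1 - 1/x) * phi q p u m + (1/x) * phi q 1 u m) has_sum L) UNIV"
    unfolding L_def Tp_def T1_def
    using p uabs by (intro has_sum_add has_sum_cmult_right Phi_m[OF q]) auto
  then have sL: "(\<lambda>m. (1 - 1/x) * phi q p u m + (1/x) * phi q 1 u m) sums L"
    by (rule has_sum_imp_sums)
  have q': "\<bar>-q\<bar> < 1" using q by simp
  define C0 where "C0 = EE p (-q)"
  have "(\<lambda>m. C0 / (2*x) * (2 * ((ec (-q) (2*m) + (1 - x) * ec (-q) (Suc (2*m))) * (s^2)^m)))
         sums (C0 / (2*x) * ((1 - t) * EE (-q) (-s) + (1 + t) * EE (-q) s))"
    by (intro sums_mult rhs_sums[OF q st])
  moreover have "(\<lambda>m. C0 / (2*x) * (2 * ((ec (-q) (2*m) + (1 - x) * ec (-q) (Suc (2*m))) * (s^2)^m)))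
      = (\<lambda>m. (1 - 1/x) * phi q p u m + (1/x) * phi q 1 u m)"
  proof (rule ext)
    fix m
    have "(1 - 1/x) * phi q p u m + (1/x) * phi q 1 u m
        = EE (q^2) (-q) / x * ((ec (-q) (2*m) + (1 - x) * ec (-q) (Suc (2*m))) * u^m)"
      unfolding p_def u_def by (rule coeff_eq[OF x0 q])
    then show "C0 / (2*x) * (2 * ((ec (-q) (2*m) + (1 - x) * ec (-q) (Suc (2*m))) * (s^2)^m))
      = (1 - 1/x) * phi q p u m + (1/x) * phi q 1 u m"
      unfolding C0_def s2 p_def by simp
  qed
  ultimately have sR: "(\<lambda>m. (1 - 1/x) * phi q p u m + (1/x) * phi q 1 u m)
         sums (C0 / (2*x) * ((1 - t) * EE (-q) (-s) + (1 + t) * EE (-q) s))" by simp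
  have LR: "L = C0 / (2*x) * ((1 - t) * EE (-q) (-s) + (1 + t) * EE (-q) s)"
    using sL sR sums_unique2 by blast
  have pq1: "qpoch_inf (-q) p = EE p (-q)"
  proof (rule qpoch_EE)
    show "\<bar>p\<bar> < 1" using p by simp
    fix j have "\<bar>q * p^j\<bar> < 1" using q p by (intro abs_mult_lt1) (auto simp: power_le_one)
    then show "-q * p^j \<noteq> 1" by auto
  qed
  have pq2: "qpoch_inf s (-q) = EE (-q) s" and pq3: "qpoch_inf (-s) (-q) = EE (-q) (-s)"
  proof -
    have b: "\<bar>s * (-q)^j\<bar> < 1" for j
      using s01 q by (intro abs_mult_lt1) (auto simp: power_le_one power_abs)
    have n1: "s * (-q)^j \<noteq> 1" for j using b[of j] by auto
    have n2: "-s * (-q)^j \<noteq> 1" for j using b[of j] by auto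
    show "qpoch_inf s (-q) = EE (-q) s" by (rule qpoch_EE[OF q' n1])
    show "qpoch_inf (-s) (-q) = EE (-q) (-s)" by (rule qpoch_EE[OF q' n2])
  qed
  show ?thesis
    using hL pq1 unfolding LR C0_def pq2[symmetric] pq3[symmetric] t_def[symmetric] p_def u_def
    by simp
qed


abbreviation cnt :: "nat list \<Rightarrow> nat \<Rightarrow> nat" where
  "cnt xs k \<equiv> length (filter (\<lambda>a. k < a) xs)"

lemma sorted_cnt_iff:
  assumes "sorted_wrt (\<ge>) xs"
  shows "(j < cnt xs k) \<longleftrightarrow> (j < length xs \<and> k < xs ! j)"
  using assms
proof (induction xs arbitrary: j)
  case Nil then show ?case by simp
next
  case (Cons a xs)
  then have s: "sorted_wrt (\<ge>) xs" and ge: "\<forall>b\<in>set xs. b \<le> a" by auto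
  show ?case
  proof (cases "k < a")
    case True
    then show ?thesis using Cons.IH[OF s] by (cases j) auto
  next
    case False
    then have "filter (\<lambda>b. k < b) xs = []" using ge by (auto simp: filter_empty_conv)
    moreover have "\<not> k < (a # xs) ! j" if "j < Suc (length xs)" for j
      using that False ge by (cases j) (auto simp: nth_mem dest!: bspec[of _ _ "xs ! (j - 1)"])
    ultimately show ?thesis using False by auto
  qed
qed

lemma cnt_le_length: "cnt xs k \<le> length xs" by simp

lemma sorted_hd_ge: "sorted_wrt (\<ge>) (xs::nat list) \<Longrightarrow> xs \<noteq> [] \<Longrightarrow> v \<in> set xs \<Longrightarrow> v \<le> hd xs"
  by (cases xs) auto

lemma length_conjugate: "length (conjugate xs) = (if xs = [] then 0 else hd xs)"
  by (simp add: conjugate_def)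

lemma nth_conjugate: "k < length (conjugate xs) \<Longrightarrow> conjugate xs ! k = cnt xs k"
  by (auto simp: conjugate_def split: if_splits)

lemma cnt_mono: "k \<le> k' \<Longrightarrow> cnt xs k' \<le> cnt xs k"
  by (induction xs) auto

lemma sorted_conjugate: "sorted_wrt (\<ge>) (conjugate xs)"
  unfolding conjugate_def sorted_wrt_map
  by (auto simp: sorted_wrt_iff_nth_less cnt_mono)

lemma filter_upt_less: "length (filter (\<lambda>k. k < c) [0..<h]) = min c h"
  by (induction h) auto

definition enc :: "nat list \<Rightarrow> nat list" where
  "enc mu = map (\<lambda>a. a + length mu) mu @ conjugate mu"

definition WD :: "nat list set" where
  "WD = {mu. sorted_wrt (\<ge>) mu}"

lemma set_conjugate_le: "c \<in> set (conjugate xs) \<Longrightarrow> c \<le> length xs"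
  by (auto simp: conjugate_def split: if_splits)

lemma enc_sorted: "sorted_wrt (\<ge>) mu \<Longrightarrow> sorted_wrt (\<ge>) (enc mu)"
  unfolding enc_def sorted_wrt_append
  by (auto simp: sorted_wrt_map sorted_conjugate dest: set_conjugate_le elim: sorted_wrt_mono_rel[rotated])

lemma enc_pos: assumes "sorted_wrt (\<ge>) mu" shows "\<forall>p\<in>set (enc mu). 0 < p"
proof
  fix p assume p: "p \<in> set (enc mu)"
  show "0 < p"
  proof (cases "p \<in> set (map (\<lambda>a. a + length mu) mu)")
    case True then show ?thesis by (cases mu) auto
  next
    case False
    then have "p \<in> set (conjugate mu)" using p by (simp add: enc_def)
    then obtain k where k: "k < length (conjugate mu)" and pk: "p = conjugate mu ! k"
      by (auto simp: in_set_conv_nth)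
    then have ne: "mu \<noteq> []" and kh: "k < hd mu" by (auto simp: length_conjugate split: if_splits)
    have "p = cnt mu k" using pk k by (simp add: nth_conjugate)
    moreover have "0 < cnt mu k" using sorted_cnt_iff[OF assms, of 0 k] ne kh by (simp add: hd_conv_nth)
    ultimately show ?thesis by simp
  qed
qed

lemma cnt_map_add: "d \<le> i \<Longrightarrow> cnt (map (\<lambda>a. a + d) xs) i = cnt xs (i - d)"
  by (induction xs) auto

lemma cnt_map_add_small: "i < d \<Longrightarrow> cnt (map (\<lambda>a. a + d) xs) i = length xs"
  by (induction xs) auto

lemma cnt_conj_big: "length xs \<le> i \<Longrightarrow> cnt (conjugate xs) i = 0"
  using set_conjugate_le[of _ xs] by (fastforce simp: filter_empty_conv)

lemma cnt_conj_small:
  assumes s: "sorted_wrt (\<ge>) xs" and i: "i < length xs"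
  shows "cnt (conjugate xs) i = xs ! i"
proof -
  have ne: "xs \<noteq> []" using i by auto
  have "cnt (conjugate xs) i = length (filter (\<lambda>k. i < cnt xs k) [0..<hd xs])"
    using ne by (simp add: conjugate_def filter_map comp_def)
  also have "\<dots> = length (filter (\<lambda>k. k < xs ! i) [0..<hd xs])"
    using sorted_cnt_iff[OF s] i by simp
  also have "\<dots> = min (xs ! i) (hd xs)" by (rule filter_upt_less)
  also have "\<dots> = xs ! i" using sorted_hd_ge[OF s ne, of "xs ! i"] i by (simp add: min_def)
  finally show ?thesis .
qed

lemma enc_conj: assumes s: "sorted_wrt (\<ge>) mu" shows "conjugate (enc mu) = enc mu"
proof (cases "mu = []")
  case True then show ?thesis by (simp add: enc_def conjugate_def)
next
  case False
  define d where "d = length mu"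
  have hd_enc: "hd (enc mu) = hd mu + d" using False by (cases mu) (auto simp: enc_def d_def)
  have len_enc: "length (enc mu) = d + hd mu" using False by (simp add: enc_def d_def length_conjugate)
  have ne: "enc mu \<noteq> []" using False by (simp add: enc_def)
  show ?thesis
  proof (rule nth_equalityI)
    show "length (conjugate (enc mu)) = length (enc mu)"
      using ne hd_enc len_enc by (simp add: length_conjugate)
    fix i assume i: "i < length (conjugate (enc mu))"
    then have i': "i < d + hd mu" using ne hd_enc by (simp add: length_conjugate)
    have "conjugate (enc mu) ! i = cnt (enc mu) i" using i by (rule nth_conjugate)
    also have "\<dots> = cnt (map (\<lambda>a. a + d) mu) i + cnt (conjugate mu) i"
      by (simp add: enc_def d_def)
    also have "\<dots> = enc mu ! i"
    proof (cases "i < d")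
      case True
      then show ?thesis using cnt_map_add_small[OF True, of mu] cnt_conj_small[OF s, of i]
        by (simp add: enc_def d_def nth_append)
    next
      case False
      then have "i - d < length (conjugate mu)" using i' False \<open>mu \<noteq> []\<close> by (simp add: length_conjugate)
      then show ?thesis using False cnt_map_add[of d i mu] cnt_conj_big[of mu i]
        by (simp add: enc_def d_def nth_append nth_conjugate)
    qed
    finally show "conjugate (enc mu) ! i = enc mu ! i" .
  qed
qed

lemma enc_SC: "mu \<in> WD \<Longrightarrow> enc mu \<in> SC"
  unfolding SC_def WD_def is_partition_def using enc_sorted enc_pos enc_conj by auto

definition Dur :: "nat list \<Rightarrow> nat" where
  "Dur la = (LEAST i. \<not> (i < length la \<and> i < la ! i))"

definition dec :: "nat list \<Rightarrow> nat list" where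
  "dec la = map (\<lambda>a. a - Dur la) (take (Dur la) la)"

lemma Dur_lt: "i < Dur la \<Longrightarrow> i < length la \<and> i < la ! i"
  unfolding Dur_def by (drule not_less_Least) simp

lemma Dur_stop: "\<not> (Dur la < length la \<and> Dur la < la ! Dur la)"
  unfolding Dur_def by (rule LeastI[of _ "length la"]) simp

lemma Dur_le: "Dur la \<le> length la"
  using Dur_lt[of "length la" la] by (metis less_irrefl not_le)

lemma Dur_enc: assumes s: "sorted_wrt (\<ge>) mu" shows "Dur (enc mu) = length mu"
  unfolding Dur_def
proof (rule Least_equality)
  show "\<not> (length mu < length (enc mu) \<and> length mu < enc mu ! length mu)"
  proof
    assume a: "length mu < length (enc mu) \<and> length mu < enc mu ! length mu"
    then have "0 < length (conjugate mu)" by (simp add: enc_def)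
    then have "enc mu ! length mu = cnt mu 0" by (simp add: enc_def nth_append nth_conjugate)
    moreover have "cnt mu 0 \<le> length mu" by simp
    ultimately show False using a by linarith
  qed
  fix y assume y: "\<not> (y < length (enc mu) \<and> y < enc mu ! y)"
  show "length mu \<le> y"
  proof (rule ccontr)
    assume "\<not> length mu \<le> y"
    then have "y < length mu" by simp
    then show False using y by (simp add: enc_def nth_append)
  qed
qed

lemma dec_enc: "sorted_wrt (\<ge>) mu \<Longrightarrow> dec (enc mu) = mu"
  unfolding dec_def Dur_enc by (simp add: enc_def comp_def)

lemma SC_facts:
  assumes "la \<in> SC"
  shows "sorted_wrt (\<ge>) la" "\<forall>p\<in>set la. 0 < p" "conjugate la = la"
  using assms by (auto simp: SC_def is_partition_def)

lemma sorted_nth_mono: "sorted_wrt (\<ge>) (xs::nat list) \<Longrightarrow> i \<le> j \<Longrightarrow> j < length xs \<Longrightarrow> xs ! j \<le> xs ! i"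
  by (metis antisym_conv1 order.refl sorted_wrt_nth_less)

lemma enc_dec: assumes la: "la \<in> SC" shows "enc (dec la) = la" and "dec la \<in> WD"
proof -
  note f = SC_facts[OF la]
  define d where "d = Dur la"
  define mu where "mu = dec la"
  have dle: "d \<le> length la" by (simp add: d_def Dur_le)
  have lmu: "length mu = d" using dle by (simp add: mu_def dec_def d_def)
  have big: "d \<le> la ! i" if "i < d" for i
  proof -
    have "d - 1 < d" using that by simp
    then have "d - 1 < la ! (d - 1)" "d - 1 < length la" using Dur_lt[of "d-1" la] by (auto simp: d_def)
    moreover have "la ! (d-1) \<le> la ! i" using that \<open>d - 1 < length la\<close> f(1)
      by (intro sorted_nth_mono) auto
    ultimately show ?thesis by linarith
  qed
  have small: "la ! i \<le> d" if "d \<le> i" "i < length la" for i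
  proof -
    have "d < length la" using that by simp
    then have "la ! d \<le> d" using Dur_stop[of la] by (simp add: d_def)
    moreover have "la ! i \<le> la ! d" using that f(1) by (intro sorted_nth_mono) auto
    ultimately show ?thesis by simp
  qed
  have take_eq: "take d la = map (\<lambda>a. a + d) mu"
  proof (rule nth_equalityI)
    show "length (take d la) = length (map (\<lambda>a. a + d) mu)" using dle lmu by simp
    fix i assume "i < length (take d la)"
    then have i: "i < d" using dle by simp
    then show "take d la ! i = map (\<lambda>a. a + d) mu ! i"
      using big[OF i] dle by (simp add: mu_def dec_def d_def[symmetric])
  qed
  show "dec la \<in> WD"
  proof -
    have "sorted_wrt (\<ge>) (take (Dur la) la)" using f(1) by (rule sorted_wrt_take)
    then have "sorted_wrt (\<lambda>x y. y - Dur la \<le> x - Dur la) (take (Dur la) la)"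
      by (rule sorted_wrt_mono_rel[rotated]) (auto intro: diff_le_mono)
    then show ?thesis unfolding WD_def dec_def by (simp add: sorted_wrt_map)
  qed
  show "enc (dec la) = la"
  proof (cases "la = []")
    case True then show ?thesis by (simp add: dec_def enc_def conjugate_def)
  next
    case False
    have len: "length la = hd la"
      using arg_cong[OF f(3), of length] False by (simp add: length_conjugate)
    have d0: "0 < d"
    proof (rule ccontr)
      assume "\<not> 0 < d"
      then have "d = 0" by simp
      moreover have "0 < la ! 0" using f(2) False by (simp add: nth_mem)
      ultimately show False using Dur_stop[of la] False by (simp add: d_def)
    qed
    have mune: "mu \<noteq> []" using lmu d0 by auto
    have hdmu: "hd mu = la ! 0 - d" using mune lmu d0 dle
      by (simp add: mu_def dec_def d_def[symmetric] hd_conv_nth)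
    have drop_eq: "drop d la = conjugate mu"
    proof (rule nth_equalityI)
      show "length (drop d la) = length (conjugate mu)"
        using mune hdmu len False by (simp add: length_conjugate hd_conv_nth)
      fix k assume k: "k < length (drop d la)"
      then have dk: "d + k < length la" by simp
      have "drop d la ! k = la ! (d + k)" using dle by simp
      also have "\<dots> = conjugate la ! (d + k)" using f(3) by simp
      also have "\<dots> = cnt la (d + k)"
        using dk f(3) by (intro nth_conjugate) simp
      also have "\<dots> = cnt (take d la) (d + k) + cnt (drop d la) (d + k)"
        by (metis append_take_drop_id filter_append length_append)
      also have "cnt (drop d la) (d + k) = 0"
      proof -
        have "\<forall>a\<in>set (drop d la). \<not> d + k < a"
        proof
          fix a assume "a \<in> set (drop d la)"
          then obtain j where "j < length (drop d la)" "a = drop d la ! j" by (auto simp: in_set_conv_nth)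
          moreover have "d + j < length la" using \<open>j < length (drop d la)\<close> by simp
          ultimately show "\<not> d + k < a" using small[of "d + j"] dle by simp
        qed
        then show ?thesis by (simp add: filter_empty_conv)
      qed
      also have "cnt (take d la) (d + k) = cnt mu k"
        unfolding take_eq using cnt_map_add[of d "d+k" mu] by simp
      also have "\<dots> = conjugate mu ! k"
        using k \<open>length (drop d la) = length (conjugate mu)\<close> by (simp add: nth_conjugate)
      finally show "drop d la ! k = conjugate mu ! k" by simp
    qed
    have "enc mu = take d la @ drop d la"
      unfolding take_eq drop_eq enc_def lmu ..
    then show ?thesis by (simp add: mu_def)
  qed
qed

lemma bij_enc: "bij_betw enc WD SC"
proof (rule bij_betw_byWitness[where f'=dec])
  show "\<forall>a\<in>WD. dec (enc a) = a" by (auto simp: WD_def dec_enc)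
  show "\<forall>a'\<in>SC. enc (dec a') = a'" using enc_dec(1) by blast
  show "enc ` WD \<subseteq> SC" using enc_SC by blast
  show "dec ` SC \<subseteq> WD" using enc_dec(2) by blast
qed

lemma sum_list_map_add: "sum_list (map (\<lambda>a. a + c) xs) = sum_list xs + length xs * (c::nat)"
  by (induction xs) auto

lemma sum_list_ind_upt: "sum_list (map (\<lambda>k. if k < a then 1 else 0::nat) [0..<h]) = min a h"
  by (induction h) auto

lemma sum_list_cnt: "\<forall>a\<in>set xs. a \<le> h \<Longrightarrow> sum_list (map (\<lambda>k. cnt xs k) [0..<h]) = sum_list xs"
proof (induction xs)
  case Nil then show ?case by (induction h) auto
next
  case (Cons a xs)
  have "sum_list (map (\<lambda>k. cnt (a # xs) k) [0..<h])
      = sum_list (map (\<lambda>k. (if k < a then 1 else 0) + cnt xs k) [0..<h])"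
    by (rule arg_cong[where f=sum_list]) auto
  also have "\<dots> = sum_list (map (\<lambda>k. if k < a then 1 else 0::nat) [0..<h]) + sum_list (map (\<lambda>k. cnt xs k) [0..<h])"
    by (rule sum_list_addf)
  also have "\<dots> = a + sum_list xs" using Cons by (simp add: sum_list_ind_upt min_def)
  finally show ?case by simp
qed

lemma psize_enc: assumes s: "sorted_wrt (\<ge>) mu"
  shows "psize (enc mu) = length mu * length mu + 2 * sum_list mu"
proof -
  have "sum_list (conjugate mu) = sum_list mu"
  proof (cases "mu = []")
    case True then show ?thesis by (simp add: conjugate_def)
  next
    case False
    then show ?thesis unfolding conjugate_def
      using sum_list_cnt[of mu "hd mu"] sorted_hd_ge[OF s False] by simp
  qed
  then show ?thesis by (simp add: psize_def enc_def sum_list_map_add)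
qed

definition corners :: "nat list \<Rightarrow> nat set" where
  "corners xs = {i. i < length xs \<and> (Suc i = length xs \<or> xs ! Suc i < xs ! i)}"

lemma finite_corners: "finite (corners xs)"
  unfolding corners_def by simp

lemma n1_corners:
  assumes s: "sorted_wrt (\<ge>) la" and pos: "\<forall>p\<in>set la. 0 < p"
  shows "n1 la = card (corners la)"
proof -
  have eq: "{c \<in> cells la. hook la c = 1} = (\<lambda>i. (i, la ! i - 1)) ` corners la"
  proof (intro equalityI subsetI)
    fix c assume c: "c \<in> {c \<in> cells la. hook la c = 1}"
    obtain i j where cij: "c = (i,j)" by (cases c)
    have i: "i < length la" and j: "j < la ! i" using c cij by (auto simp: cells_def)
    have ne: "la \<noteq> []" using i by auto
    have jh: "j < hd la" using sorted_hd_ge[OF s ne, of "la ! i"] i j by (simp add: nth_mem)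
    have cj: "conjugate la ! j = cnt la j" using jh ne by (simp add: nth_conjugate length_conjugate)
    have "hook la (i,j) = 1" using c cij by simp
    then have h1: "la ! i - j - 1 = 0" and h2: "cnt la j - i - 1 = 0"
      by (auto simp: hook_def cj)
    have jeq: "j = la ! i - 1" using h1 j by simp
    have "\<not> (Suc i < cnt la j)" using h2 by simp
    then have "\<not> (Suc i < length la \<and> j < la ! Suc i)" using sorted_cnt_iff[OF s] by blast
    then have "i \<in> corners la"
      using i j jeq by (auto simp: corners_def)
    then show "c \<in> (\<lambda>i. (i, la ! i - 1)) ` corners la" using cij jeq by auto
  next
    fix c assume "c \<in> (\<lambda>i. (i, la ! i - 1)) ` corners la"
    then obtain i where i: "i \<in> corners la" and c: "c = (i, la ! i - 1)" by auto
    have il: "i < length la" using i by (simp add: corners_def)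
    have p: "0 < la ! i" using pos il by (simp add: nth_mem)
    define j where "j = la ! i - 1"
    have j: "j < la ! i" using p by (simp add: j_def)
    have ne: "la \<noteq> []" using il by auto
    have jh: "j < hd la" using sorted_hd_ge[OF s ne, of "la ! i"] il j by (simp add: nth_mem)
    have cj: "conjugate la ! j = cnt la j" using jh ne by (simp add: nth_conjugate length_conjugate)
    have c1: "i < cnt la j" using sorted_cnt_iff[OF s] il j by blast
    have c2: "\<not> (Suc i < cnt la j)"
    proof
      assume "Suc i < cnt la j"
      then have "Suc i < length la" "j < la ! Suc i" using sorted_cnt_iff[OF s] by blast+
      moreover have "la ! Suc i < la ! i" using i \<open>Suc i < length la\<close> by (auto simp: corners_def)
      ultimately show False by (simp add: j_def)
    qed
    have cs: "cnt la j = Suc i" using c1 c2 by simp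
    have a0: "la ! i - j - 1 = 0" using j by (simp add: j_def)
    have "hook la (i,j) = 1" unfolding hook_def using cs a0 cj by simp
    then have "hook la c = 1" using c by (simp add: j_def)
    moreover have "c \<in> cells la" using c il j by (simp add: cells_def j_def)
    ultimately show "c \<in> {c \<in> cells la. hook la c = 1}" by simp
  qed
  have "inj_on (\<lambda>i. (i, la ! i - 1)) (corners la)" by (rule inj_onI) simp
  then show ?thesis unfolding n1_def eq by (rule card_image)
qed

lemma corners_Cons:
  assumes "xs \<noteq> []"
  shows "corners (a # xs) = (if xs ! 0 < a then {0} else {}) \<union> Suc ` corners xs"
proof (intro equalityI subsetI)
  fix i assume i: "i \<in> corners (a # xs)"
  show "i \<in> (if xs ! 0 < a then {0} else {}) \<union> Suc ` corners xs"
  proof (cases i)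
    case 0 then show ?thesis using i assms by (auto simp: corners_def)
  next
    case (Suc k) then show ?thesis using i by (auto simp: corners_def)
  qed
next
  fix i assume "i \<in> (if xs ! 0 < a then {0} else {}) \<union> Suc ` corners xs"
  then show "i \<in> corners (a # xs)" using assms by (auto simp: corners_def split: if_splits)
qed

lemma card_corners: "sorted_wrt (\<ge>) (xs::nat list) \<Longrightarrow> card (corners xs) = card (set xs)"
proof (induction xs)
  case Nil then show ?case by (simp add: corners_def)
next
  case (Cons a xs)
  then have s: "sorted_wrt (\<ge>) xs" and ge: "\<forall>b\<in>set xs. b \<le> a" by auto
  show ?case
  proof (cases "xs = []")
    case True
    have "corners [a] = {0}" by (auto simp: corners_def)
    then show ?thesis using True by simp
  next
    case False
    have "card (Suc ` corners xs) = card (corners xs)" by (rule card_image) simp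
    have mem: "a \<in> set xs \<longleftrightarrow> \<not> xs ! 0 < a"
    proof
      assume "a \<in> set xs"
      then have "a \<le> hd xs" using sorted_hd_ge[OF s False] by blast
      then show "\<not> xs ! 0 < a" using False by (simp add: hd_conv_nth)
    next
      assume "\<not> xs ! 0 < a"
      moreover have "xs ! 0 \<le> a" using ge False by (simp add: nth_mem)
      ultimately have "xs ! 0 = a" by simp
      then show "a \<in> set xs" using False by (metis nth_mem length_greater_0_conv)
    qed
    have "card (corners (a # xs)) = (if xs ! 0 < a then 1 else 0) + card (corners xs)"
      unfolding corners_Cons[OF False]
      using \<open>card (Suc ` corners xs) = card (corners xs)\<close> finite_corners[of xs]
      by (auto simp: card_insert_if)
    also have "\<dots> = card (set (a # xs))" using Cons.IH[OF s] mem
      by (auto simp: card_insert_if)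
    finally show ?thesis .
  qed
qed

lemma cnt_Suc: "cnt xs k = cnt xs (Suc k) + length (filter (\<lambda>a. a = Suc k) xs)"
  by (induction xs) auto

lemma cnt_Suc_less: "cnt xs (Suc k) < cnt xs k \<longleftrightarrow> Suc k \<in> set xs"
proof -
  have "0 < length (filter (\<lambda>a. a = Suc k) xs) \<longleftrightarrow> Suc k \<in> set xs"
    by (auto simp: filter_empty_conv length_greater_0_conv[symmetric] simp del: length_greater_0_conv)
  then show ?thesis using cnt_Suc[where xs=xs and k=k] by linarith
qed

lemma card_corners_conj:
  assumes s: "sorted_wrt (\<ge>) (mu::nat list)"
  shows "card (corners (conjugate mu)) = card (set mu - {0})"
proof (cases "mu = []")
  case True then show ?thesis by (simp add: corners_def conjugate_def)
next
  case False
  define h where "h = hd mu"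
  have hin: "h \<in> set mu" using False by (simp add: h_def)
  have le: "v \<le> h" if "v \<in> set mu" for v using sorted_hd_ge[OF s False that] by (simp add: h_def)
  have lc: "length (conjugate mu) = h" using False by (simp add: length_conjugate h_def)
  have eq: "corners (conjugate mu) = {k. k < h \<and> Suc k \<in> set mu}"
  proof (intro equalityI subsetI)
    fix k assume k: "k \<in> corners (conjugate mu)"
    then have kh: "k < h" by (simp add: corners_def lc)
    show "k \<in> {k. k < h \<and> Suc k \<in> set mu}"
    proof (cases "Suc k = h")
      case True then show ?thesis using kh hin by simp
    next
      case False
      then have "Suc k < h" using kh by simp
      then have "cnt mu (Suc k) < cnt mu k"
        using k False lc by (simp add: corners_def nth_conjugate)
      then show ?thesis using kh cnt_Suc_less by simp
    qed
  next
    fix k assume k: "k \<in> {k. k < h \<and> Suc k \<in> set mu}"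
    then have kh: "k < h" and kin: "Suc k \<in> set mu" by auto
    show "k \<in> corners (conjugate mu)"
    proof (cases "Suc k = h")
      case True then show ?thesis using kh lc by (simp add: corners_def)
    next
      case False
      then have "Suc k < h" using kh by simp
      moreover have "cnt mu (Suc k) < cnt mu k" using kin cnt_Suc_less by simp
      ultimately show ?thesis using kh lc by (simp add: corners_def nth_conjugate)
    qed
  qed
  have "Suc ` {k. k < h \<and> Suc k \<in> set mu} = set mu - {0}"
  proof (intro equalityI subsetI)
    fix v assume "v \<in> Suc ` {k. k < h \<and> Suc k \<in> set mu}" then show "v \<in> set mu - {0}" by auto
  next
    fix v assume v: "v \<in> set mu - {0}"
    then obtain k where "v = Suc k" by (cases v) auto
    moreover have "v \<le> h" using le v by simp
    ultimately show "v \<in> Suc ` {k. k < h \<and> Suc k \<in> set mu}" using v by auto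
  qed
  moreover have "card (Suc ` {k. k < h \<and> Suc k \<in> set mu}) = card {k. k < h \<and> Suc k \<in> set mu}"
    by (rule card_image) simp
  ultimately show ?thesis unfolding eq by simp
qed

lemma corners_enc:
  assumes s: "sorted_wrt (\<ge>) mu"
  shows "corners (enc mu) = corners mu \<union> (\<lambda>k. k + length mu) ` corners (conjugate mu)"
proof -
  define d where "d = length mu"
  have len: "length (enc mu) = d + length (conjugate mu)" by (simp add: enc_def d_def)
  have nA: "enc mu ! i = mu ! i + d" if "i < d" for i using that by (simp add: enc_def nth_append d_def)
  have nB: "enc mu ! (d + k) = conjugate mu ! k" for k by (simp add: enc_def nth_append d_def)
  show ?thesis
  proof (intro equalityI subsetI)
    fix i assume i: "i \<in> corners (enc mu)"
    show "i \<in> corners mu \<union> (\<lambda>k. k + length mu) ` corners (conjugate mu)"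
    proof (cases "i < d")
      case True
      have "i \<in> corners mu"
      proof (cases "Suc i = d")
        case True then show ?thesis by (simp add: corners_def d_def)
      next
        case False
        then have "Suc i < d" using \<open>i < d\<close> by simp
        then show ?thesis using i nA[of i] nA[of "Suc i"] True len by (auto simp: corners_def d_def)
      qed
      then show ?thesis by simp
    next
      case False
      then obtain k where k: "i = d + k" by (metis le_add_diff_inverse not_less)
      then have "k \<in> corners (conjugate mu)" using i len nB[of k] nB[of "Suc k"]
        by (auto simp: corners_def)
      then show ?thesis using k by (auto simp: d_def)
    qed
  next
    fix i assume i: "i \<in> corners mu \<union> (\<lambda>k. k + length mu) ` corners (conjugate mu)"
    show "i \<in> corners (enc mu)"
    proof (cases "i \<in> corners mu")
      case True
      then have id: "i < d" by (simp add: corners_def d_def)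
      show ?thesis
      proof (cases "Suc i = d")
        case False
        then have "Suc i < d" using id by simp
        then show ?thesis using True nA[of i] nA[of "Suc i"] len id by (auto simp: corners_def d_def)
      next
        case True
        show ?thesis
        proof (cases "Suc i = length (enc mu)")
          case True then show ?thesis using id by (simp add: corners_def)
        next
          case False
          then have cl: "0 < length (conjugate mu)" using len \<open>Suc i = d\<close> by simp
          have e1: "enc mu ! Suc i = cnt mu 0" using nB[of 0] \<open>Suc i = d\<close> cl by (simp add: nth_conjugate)
          have "cnt mu 0 < mu ! i + d"
          proof (cases "mu ! i = 0")
            case True
            then have "\<not> (i < cnt mu 0)" using sorted_cnt_iff[OF s, of i 0] by simp
            then show ?thesis using \<open>Suc i = d\<close> by simp
          next
            case False
            have "cnt mu 0 \<le> d" by (simp add: d_def)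
            then show ?thesis using False by simp
          qed
          then show ?thesis using e1 nA[OF id] id len by (simp add: corners_def)
        qed
      qed
    next
      case False
      then obtain k where k: "k \<in> corners (conjugate mu)" and ik: "i = k + d" using i by (auto simp: d_def)
      then show ?thesis using len nB[of k] nB[of "Suc k"] by (auto simp: corners_def add.commute)
    qed
  qed
qed

lemma n1_enc: assumes s: "sorted_wrt (\<ge>) mu"
  shows "n1 (enc mu) = card (set mu) + card (set mu - {0})"
proof -
  have "n1 (enc mu) = card (corners (enc mu))"
    using enc_sorted[OF s] enc_pos[OF s] by (rule n1_corners)
  also have "\<dots> = card (corners mu) + card ((\<lambda>k. k + length mu) ` corners (conjugate mu))"
    unfolding corners_enc[OF s]
    by (rule card_Un_disjoint) (auto simp: finite_corners corners_def)
  also have "card ((\<lambda>k. k + length mu) ` corners (conjugate mu)) = card (corners (conjugate mu))"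
    by (rule card_image) simp
  finally show ?thesis using card_corners[OF s] card_corners_conj[OF s] by simp
qed


definition WDd :: "nat \<Rightarrow> nat list set" where
  "WDd d = {mu. sorted_wrt (\<ge>) mu \<and> length mu = d}"

definition zenc :: "nat \<Rightarrow> nat \<times> nat list \<Rightarrow> nat list" where
  "zenc d z = map Suc (snd z) @ replicate (d - fst z) 0"

definition zdec :: "nat list \<Rightarrow> nat \<times> nat list" where
  "zdec mu = (length (filter (\<lambda>a. a \<noteq> 0) mu), map (\<lambda>a. a - 1) (filter (\<lambda>a. a \<noteq> 0) mu))"

lemma sorted_split0:
  "sorted_wrt (\<ge>) (mu::nat list) \<Longrightarrow> mu = filter (\<lambda>a. a \<noteq> 0) mu @ replicate (length mu - length (filter (\<lambda>a. a \<noteq> 0) mu)) 0"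
proof (induction mu)
  case Nil then show ?case by simp
next
  case (Cons a mu)
  then have s: "sorted_wrt (\<ge>) mu" and ge: "\<forall>b\<in>set mu. b \<le> a" by auto
  show ?case
  proof (cases "a = 0")
    case True
    then have "\<forall>b\<in>set mu. b = 0" using ge by auto
    then have "filter (\<lambda>a. a \<noteq> 0) mu = []" and "mu = replicate (length mu) 0"
      by (auto simp: filter_empty_conv intro: replicate_eqI)
    then show ?thesis using True by simp
  next
    case False
    have le: "length (filter (\<lambda>a. a \<noteq> 0) mu) \<le> length mu" by simp
    show ?thesis using False Cons.IH[OF s] le by (simp add: Suc_diff_le)
  qed
qed

lemma map_Suc_pred: "map Suc (map (\<lambda>a. a - 1) (filter (\<lambda>a. a \<noteq> (0::nat)) mu)) = filter (\<lambda>a. a \<noteq> 0) mu"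
  by (induction mu) auto

lemma sorted_rep0: "sorted_wrt (\<ge>) (replicate k (0::nat))"
  by (induction k) auto

lemma zenc_bij: "bij_betw (zenc d) (SIGMA n:{..d}. WDd n) (WDd d)"
proof (rule bij_betw_byWitness[where f'=zdec])
  show "\<forall>z\<in>(SIGMA n:{..d}. WDd n). zdec (zenc d z) = z"
  proof
    fix z assume z: "z \<in> (SIGMA n:{..d}. WDd n)"
    obtain n nu where zz: "z = (n, nu)" by (cases z)
    have "filter (\<lambda>a. a \<noteq> 0) (zenc d z) = map Suc nu"
      unfolding zenc_def zz by (simp add: filter_empty_conv comp_def)
    moreover have "length nu = n" using z zz by (simp add: WDd_def)
    ultimately show "zdec (zenc d z) = z" unfolding zdec_def zz by (simp add: comp_def)
  qed
  show "\<forall>mu\<in>WDd d. zenc d (zdec mu) = mu"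
  proof
    fix mu assume mu: "mu \<in> WDd d"
    then have s: "sorted_wrt (\<ge>) mu" and l: "length mu = d" by (auto simp: WDd_def)
    show "zenc d (zdec mu) = mu"
      unfolding zenc_def zdec_def using sorted_split0[OF s] l map_Suc_pred[of mu] by simp
  qed
  show "zenc d ` (SIGMA n:{..d}. WDd n) \<subseteq> WDd d"
  proof
    fix mu assume "mu \<in> zenc d ` (SIGMA n:{..d}. WDd n)"
    then obtain n nu where n: "n \<le> d" and nu: "nu \<in> WDd n" and mu: "mu = zenc d (n, nu)" by auto
    have "sorted_wrt (\<ge>) (map Suc nu @ replicate (d - n) 0)"
      using nu by (auto simp: WDd_def sorted_wrt_append sorted_wrt_map sorted_rep0)
    then show "mu \<in> WDd d" using mu n nu by (simp add: WDd_def zenc_def)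
  qed
  show "zdec ` WDd d \<subseteq> (SIGMA n:{..d}. WDd n)"
  proof
    fix z assume "z \<in> zdec ` WDd d"
    then obtain mu where mu: "mu \<in> WDd d" and z: "z = zdec mu" by auto
    then have s: "sorted_wrt (\<ge>) mu" and l: "length mu = d" by (auto simp: WDd_def)
    have "sorted_wrt (\<ge>) (filter (\<lambda>a. a \<noteq> 0) mu)" using s by (rule sorted_wrt_filter)
    then have "sorted_wrt (\<ge>) (map (\<lambda>a. a - 1) (filter (\<lambda>a. a \<noteq> 0) mu))"
      unfolding sorted_wrt_map by (rule sorted_wrt_mono_rel[rotated]) auto
    moreover have "length (filter (\<lambda>a. a \<noteq> 0) mu) \<le> d" using l by (metis length_filter_le)
    ultimately show "z \<in> (SIGMA n:{..d}. WDd n)" using z by (simp add: zdec_def WDd_def)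
  qed
qed

lemma zenc_props:
  assumes "length nu = n" "n \<le> d"
  shows "sum_list (zenc d (n, nu)) = sum_list nu + n"
    and "set (zenc d (n, nu)) - {0} = Suc ` set nu"
    and "0 \<in> set (zenc d (n, nu)) \<longleftrightarrow> n < d"
proof -
  show "sum_list (zenc d (n, nu)) = sum_list nu + n"
  proof -
    have "sum_list (map Suc nu) = sum_list nu + length nu" by (induction nu) auto
    then show ?thesis unfolding zenc_def using assms(1) by (simp add: sum_list_replicate)
  qed
  show "set (zenc d (n, nu)) - {0} = Suc ` set nu"
    unfolding zenc_def by auto
  show "0 \<in> set (zenc d (n, nu)) \<longleftrightarrow> n < d"
    unfolding zenc_def using assms by auto
qed

lemma card_zenc:
  assumes "length nu = n" "n \<le> d"
  shows "card (set (zenc d (n, nu)) - {0}) = card (set nu)"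
    and "card (set (zenc d (n, nu))) = card (set nu) + (if n < d then 1 else 0)"
proof -
  have c1: "card (set (zenc d (n, nu)) - {0}) = card (set nu)"
    unfolding zenc_props(2)[OF assms] by (rule card_image) simp
  then show "card (set (zenc d (n, nu)) - {0}) = card (set nu)" .
  show "card (set (zenc d (n, nu))) = card (set nu) + (if n < d then 1 else 0)"
  proof (cases "n < d")
    case True
    then have "0 \<in> set (zenc d (n, nu))" using zenc_props(3)[OF assms] by simp
    then have "card (set (zenc d (n, nu))) = Suc (card (set (zenc d (n, nu)) - {0}))"
      by (intro card_Suc_Diff1[symmetric]) auto
    then show ?thesis using c1 True by simp
  next
    case False
    then have "0 \<notin> set (zenc d (n, nu))" using zenc_props(3)[OF assms] by simp
    then have "set (zenc d (n, nu)) = set (zenc d (n, nu)) - {0}" by auto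
    then show ?thesis using c1 False by simp
  qed
qed

lemma geom_summable_on: "0 \<le> (p::real) \<Longrightarrow> p < 1 \<Longrightarrow> (\<lambda>a::nat. p^a) summable_on UNIV"
  by (subst summable_on_UNIV_nonneg_real_iff) (auto intro: summable_geometric)

lemma lists_summable:
  assumes p: "0 \<le> (p::real)" "p < 1"
  shows "(\<lambda>mu. p^(sum_list mu)) summable_on {mu::nat list. length mu = d}"
proof (induction d)
  case 0
  have "{mu::nat list. length mu = 0} = {[]}" by auto
  then show ?case by simp
next
  case (Suc d)
  then obtain S where S: "((\<lambda>mu. p^(sum_list mu)) has_sum S) {mu::nat list. length mu = d}"
    by (auto simp: summable_on_def)
  have bij: "bij_betw (\<lambda>z. fst z # snd z) (UNIV \<times> {mu::nat list. length mu = d}) {mu. length mu = Suc d}"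
    by (rule bij_betw_byWitness[where f'="\<lambda>mu. (hd mu, tl mu)"]) (auto simp: length_Suc_conv)
  have "(\<lambda>z. p^(sum_list (fst z # snd z))) summable_on (SIGMA a:UNIV. {mu::nat list. length mu = d})"
  proof (rule summable_on_SigmaI[where g="\<lambda>a. p^a * S"])
    fix a :: nat
    have "((\<lambda>mu. p^a * p^(sum_list mu)) has_sum p^a * S) {mu::nat list. length mu = d}"
      using S by (rule has_sum_cmult_right)
    then show "((\<lambda>y. p^(sum_list (fst (a, y) # snd (a, y)))) has_sum p^a * S) {mu::nat list. length mu = d}"
      by (simp add: power_add)
  next
    show "(\<lambda>a. p^a * S) summable_on UNIV" using geom_summable_on[OF p] by (rule summable_on_cmult_left)
  qed (use p in simp)
  then show ?case using summable_on_reindex_bij_betw[OF bij, of "\<lambda>mu. p^(sum_list mu)"] by simp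
qed

definition Dw :: "real \<Rightarrow> real \<Rightarrow> nat list \<Rightarrow> real" where
  "Dw y p mu = y^(card (set mu)) * p^(sum_list mu)"

definition Gw :: "real \<Rightarrow> real \<Rightarrow> nat list \<Rightarrow> real" where
  "Gw x p mu = x^(card (set mu) + card (set mu - {0})) * p^(sum_list mu)"

lemma WDd_sub: "WDd d \<subseteq> {mu. length mu = d}" by (auto simp: WDd_def)

lemma w_summable:
  fixes F :: "nat list \<Rightarrow> real" and p c :: real
  assumes p: "0 \<le> p" "p < 1" and c: "0 \<le> c" "c \<le> 1"
    and F: "\<And>mu. F mu = c^(k mu) * p^(sum_list mu)"
  shows "F summable_on WDd d"
proof (rule summable_on_comparison_test)
  show "(\<lambda>mu. p^(sum_list mu)) summable_on WDd d"
    using summable_on_subset_banach[OF lists_summable[OF p] WDd_sub] .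
  fix mu
  have "c^(k mu) \<le> 1" using c by (rule power_le_one)
  then have "c^(k mu) * p^(sum_list mu) \<le> 1 * p^(sum_list mu)"
    using p by (intro mult_right_mono) auto
  then show "F mu \<le> p^(sum_list mu)" unfolding F by simp
  show "0 \<le> F mu" unfolding F using p c by simp
qed

lemma decomp:
  fixes F H :: "nat list \<Rightarrow> real"
  assumes Fs: "F summable_on WDd d"
    and eq: "\<And>n nu. n \<le> d \<Longrightarrow> nu \<in> WDd n \<Longrightarrow> F (zenc d (n, nu)) = c n * H nu"
    and H: "\<And>n. n \<le> d \<Longrightarrow> (H has_sum h n) (WDd n)"
  shows "infsum F (WDd d) = (\<Sum>n\<le>d. c n * h n)"
proof -
  have hF: "(F has_sum infsum F (WDd d)) (WDd d)" using Fs by (simp add: summable_iff_has_sum_infsum)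
  have hS: "((\<lambda>z. F (zenc d z)) has_sum infsum F (WDd d)) (SIGMA n:{..d}. WDd n)"
    using has_sum_reindex_bij_betw[OF zenc_bij, of F] hF by simp
  have "((\<lambda>n. c n * h n) has_sum infsum F (WDd d)) {..d}"
  proof (rule has_sum_Sigma'[OF hS])
    fix n assume n: "n \<in> {..d}"
    have "((\<lambda>nu. c n * H nu) has_sum c n * h n) (WDd n)" using H n by (intro has_sum_cmult_right) simp
    moreover have "\<And>nu. nu \<in> WDd n \<Longrightarrow> F (zenc d (n, nu)) = c n * H nu" using eq n by simp
    ultimately show "((\<lambda>nu. F (zenc d (n, nu))) has_sum c n * h n) (WDd n)"
      by (subst has_sum_cong) auto
  qed
  moreover have "((\<lambda>n. c n * h n) has_sum (\<Sum>n\<le>d. c n * h n)) {..d}" by (rule has_sum_finite) simp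
  ultimately show ?thesis using has_sum_unique by blast
qed

lemma WDd_0: "WDd 0 = {[]}" by (auto simp: WDd_def)

lemma sum_atMost_split: "(\<Sum>k\<le>(n::nat). f k) = (\<Sum>k<n. f k) + (f n :: real)"
proof -
  have "(\<Sum>k\<le>n. f k) = (\<Sum>k<Suc n. f k)" by (simp only: lessThan_Suc_atMost)
  also have "\<dots> = (\<Sum>k<n. f k) + f n" by (rule sum.lessThan_Suc)
  finally show ?thesis .
qed

lemma KS:
  fixes p u :: real
  assumes p: "0 \<le> p" "p < 1"
  defines "K \<equiv> \<lambda>n. qp u p n / qp p p n"
  shows "(\<Sum>n<d. p^n * K n) * (1 - u) = (1 - p^d) * K d"
proof (induction d)
  case 0 then show ?case by (simp add: K_def)
next
  case (Suc d)
  have nz: "qp p p d \<noteq> 0" using qp_pos[OF p, of d] by simp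
  have "p^Suc d < 1" using p by (simp only: power_less_one_iff) simp
  then have nz2: "1 - p * p^d \<noteq> 0" by simp
  have "(\<Sum>n<Suc d. p^n * K n) * (1 - u) = (1 - p^d) * K d + p^d * K d * (1 - u)"
    by (simp only: sum.lessThan_Suc distrib_right Suc.IH)
  also have "\<dots> = (1 - p^Suc d) * K (Suc d)"
    using nz nz2 unfolding K_def by (simp add: qp_Suc field_simps)
  finally show ?case .
qed

context
  fixes x p :: real
  assumes x: "0 < x" "x < 1" and p: "0 \<le> p" "p < 1"
begin

definition DD :: "nat \<Rightarrow> real" where "DD n = infsum (Dw (x^2) p) (WDd n)"
definition GG :: "nat \<Rightarrow> real" where "GG n = infsum (Gw x p) (WDd n)"

lemma Dw_summ: "Dw (x^2) p summable_on WDd d"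
  by (rule w_summable[OF p, of "x^2" _ "\<lambda>mu. card (set mu)"]) (use x in \<open>auto simp: Dw_def power_le_one\<close>)

lemma Gw_summ: "Gw x p summable_on WDd d"
  by (rule w_summable[OF p, of x _ "\<lambda>mu. card (set mu) + card (set mu - {0})"]) (use x in \<open>auto simp: Gw_def\<close>)

lemma DR: "DD d = (\<Sum>n\<le>d. ((if n < d then x^2 else 1) * p^n) * DD n)"
  unfolding DD_def
proof (rule decomp[OF Dw_summ])
  fix n nu assume n: "n \<le> d" and nu: "nu \<in> WDd n"
  then have l: "length nu = n" by (simp add: WDd_def)
  show "Dw (x^2) p (zenc d (n, nu)) = ((if n < d then x^2 else 1) * p^n) * Dw (x^2) p nu"
    unfolding Dw_def card_zenc(2)[OF l n] zenc_props(1)[OF l n] by (simp add: power_add)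
next
  fix n show "(Dw (x^2) p has_sum infsum (Dw (x^2) p) (WDd n)) (WDd n)"
    using Dw_summ by (simp add: summable_iff_has_sum_infsum)
qed

lemma GR: "GG d = (\<Sum>n\<le>d. ((if n < d then x else 1) * p^n) * DD n)"
  unfolding GG_def DD_def
proof (rule decomp[OF Gw_summ])
  fix n nu assume n: "n \<le> d" and nu: "nu \<in> WDd n"
  then have l: "length nu = n" by (simp add: WDd_def)
  show "Gw x p (zenc d (n, nu)) = ((if n < d then x else 1) * p^n) * Dw (x^2) p nu"
    unfolding Gw_def Dw_def card_zenc(1)[OF l n] card_zenc(2)[OF l n] zenc_props(1)[OF l n]
    by (simp add: power_add power_mult[symmetric] mult_2)
next
  fix n show "(Dw (x^2) p has_sum infsum (Dw (x^2) p) (WDd n)) (WDd n)"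
    using Dw_summ by (simp add: summable_iff_has_sum_infsum)
qed

lemma DD_0: "DD 0 = 1" unfolding DD_def WDd_0 by (simp add: Dw_def)

lemma DK: "DD n = qp (1 - x^2) p n / qp p p n"
proof (induction n rule: less_induct)
  case (less n)
  define K where "K n = qp (1 - x^2) p n / qp p p n" for n
  show ?case
  proof (cases "n = 0")
    case True then show ?thesis using DD_0 by simp
  next
    case False
    have "DD n = (\<Sum>k<n. ((if k < n then x^2 else 1) * p^k) * DD k) + p^n * DD n"
      using DR[of n] by (simp add: sum_atMost_split)
    also have "(\<Sum>k<n. ((if k < n then x^2 else 1) * p^k) * DD k) = (\<Sum>k<n. p^k * K k * x^2)"
      by (rule sum.cong) (simp_all add: less K_def)
    also have "\<dots> = (\<Sum>k<n. p^k * K k) * (1 - (1 - x^2))" by (simp add: sum_distrib_right)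
    also have "\<dots> = (1 - p^n) * K n" unfolding K_def by (rule KS[OF p])
    finally have "(1 - p^n) * DD n = (1 - p^n) * K n" by (simp add: algebra_simps)
    moreover have "p^n < 1" using p False by (simp add: power_less_one_iff)
    ultimately have "DD n = K n" by simp
    then show ?thesis by (simp add: K_def)
  qed
qed

lemma GK: "GG d = (p^d + (1 - p^d) / x) * (qp (1 - x^2) p d / qp p p d)"
proof -
  define K where "K n = qp (1 - x^2) p n / qp p p n" for n
  have "GG d = (\<Sum>k<d. ((if k < d then x else 1) * p^k) * DD k) + p^d * DD d"
    using GR[of d] by (simp add: sum_atMost_split)
  also have "(\<Sum>k<d. ((if k < d then x else 1) * p^k) * DD k) = x * (\<Sum>k<d. p^k * K k)"
    by (simp add: sum_distrib_left DK K_def algebra_simps)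
  also have "(\<Sum>k<d. p^k * K k) = (1 - p^d) * K d / x^2"
  proof -
    have "(\<Sum>k<d. p^k * K k) * (1 - (1 - x^2)) = (1 - p^d) * K d" unfolding K_def by (rule KS[OF p])
    then show ?thesis using x by (simp add: field_simps)
  qed
  moreover have "qp p p d \<noteq> 0" using qp_pos[OF p, of d] by simp
  ultimately show ?thesis using x by (simp add: DK K_def power2_eq_square field_simps)
qed

end


theorem theorem3p1:
  fixes x q :: real
  assumes "0 < x" "x < 1" "\<bar>q\<bar> < 1"
  defines "s \<equiv> sqrt (1 - x\<^sup>2)"
  shows "((\<lambda>la. x ^ n1 la * q ^ psize la) has_sum
           (qpoch_inf (-q) (q\<^sup>2) / (2 * x) *
             ((1 - sqrt ((1 - x) / (1 + x))) * qpoch_inf (-s) (-q)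
              + (1 + sqrt ((1 - x) / (1 + x))) * qpoch_inf s (-q)))) SC"
proof -
  note x = assms(1,2) and q = assms(3)
  define R where "R = qpoch_inf (-q) (q\<^sup>2) / (2 * x) *
             ((1 - sqrt ((1 - x) / (1 + x))) * qpoch_inf (-s) (-q)
              + (1 + sqrt ((1 - x) / (1 + x))) * qpoch_inf s (-q))"
  define p where "p = q^2"
  have p: "0 \<le> p" "p < 1" using q by (auto simp: p_def abs_square_less_1)
  define G where "G d = (p^d + (1 - p^d) / x) * (qp (1 - x^2) p d / qp p p d)" for d
  have A: "((\<lambda>d. q^(d*d) * G d) has_sum R) UNIV"
    using analytic[OF x q] unfolding R_def s_def G_def p_def by simp
  have qa: "\<bar>\<bar>q\<bar>\<bar> < 1" using q by simp
  have Aabs: "(\<lambda>d. \<bar>q\<bar>^(d*d) * G d) summable_on UNIV"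
    using analytic[OF x qa] unfolding G_def p_def by (auto simp: summable_on_def)
  have B: "(Gw x p has_sum G d) (WDd d)" for d
  proof -
    have "(Gw x p has_sum GG x p d) (WDd d)"
      unfolding GG_def[OF x p] using Gw_summ[OF x p] by (simp add: summable_iff_has_sum_infsum)
    then show ?thesis unfolding GK[OF x p] G_def .
  qed
  have Gw0: "0 \<le> Gw x p mu" for mu using x p by (simp add: Gw_def)
  define f where "f z = q^(fst z * fst z) * Gw x p (snd z)" for z
  have fib: "((\<lambda>mu. f (d, mu)) has_sum q^(d*d) * G d) (WDd d)" for d
    unfolding f_def using B by (simp add: has_sum_cmult_right)
  have "(\<lambda>z. \<bar>q\<bar>^(fst z * fst z) * Gw x p (snd z)) summable_on (SIGMA d:UNIV. WDd d)"
  proof (rule summable_on_SigmaI[where g="\<lambda>d. \<bar>q\<bar>^(d*d) * G d"])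
    show "((\<lambda>y. \<bar>q\<bar>^(fst (d, y) * fst (d, y)) * Gw x p (snd (d, y))) has_sum \<bar>q\<bar>^(d*d) * G d) (WDd d)" for d
      using B by (simp add: has_sum_cmult_right)
  qed (use Aabs Gw0 in auto)
  then have "(\<lambda>z. norm (f z)) summable_on (SIGMA d:UNIV. WDd d)"
    by (rule Infinite_Sum.abs_summable_on_comparison_test') (simp add: f_def abs_mult power_abs Gw0)
  then have fs: "f summable_on (SIGMA d:UNIV. WDd d)" by (rule Infinite_Sum.abs_summable_summable)
  have hS: "(f has_sum R) (SIGMA d:UNIV. WDd d)"
    by (rule has_sum_SigmaI[OF _ A fs]) (use fib in simp)
  have bij1: "bij_betw (\<lambda>mu. (length mu, mu)) WD (SIGMA d:UNIV. WDd d)"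
    by (rule bij_betw_byWitness[where f'=snd]) (auto simp: WD_def WDd_def)
  have hW: "((\<lambda>mu. f (length mu, mu)) has_sum R) WD"
    using has_sum_reindex_bij_betw[OF bij1, of f] hS by simp
  have eq: "x ^ n1 (enc mu) * q ^ psize (enc mu) = f (length mu, mu)" if "mu \<in> WD" for mu
  proof -
    have s: "sorted_wrt (\<ge>) mu" using that by (simp add: WD_def)
    show ?thesis unfolding f_def Gw_def p_def n1_enc[OF s] psize_enc[OF s]
      by (simp add: power_add power_mult)
  qed
  have "((\<lambda>mu. x ^ n1 (enc mu) * q ^ psize (enc mu)) has_sum R) WD"
    using hW eq by (subst has_sum_cong) auto
  then have "((\<lambda>la. x ^ n1 la * q ^ psize la) has_sum R) SC"
    using has_sum_reindex_bij_betw[OF bij_enc, of "\<lambda>la. x ^ n1 la * q ^ psize la"] by simp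
  then show ?thesis unfolding R_def .
qed


end
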